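(* Let $n\ge q\ge1$, $L\ge1$, and let $B_1,\dots,B_r\subseteq[n]$ be fixed sets with $|B_j|\le L$. For sets $K_1,\dots,K_k\in\binom{[n]}{q}$, let $G$ be the intersection graph on the $k+r$ labeled objects $K_1,\dots,K_k,B_1,\dots,B_r$, with an edge between two objects iff their sets intersect. Then: (1) If $x\in[n]$ is fixed, the number of ordered $k$-tuples $(K_1,\dots,K_k)\in\binom{[n]}{q}^k$ such that $x\in\big(\bigcup_i K_i\big)\cup\big(\bigcup_j B_j\big)$ and $G$ is connected is at most $\binom{n-1}{q-1}^{k}(kq+rL)^{k+r-1}$. (2) If $k\ge1$ and $K_1\in\binom{[n]}{q}$ is fixed, the number of ordered $(k-1)$-tuples $(K_2,\dots,K_k)$ such that $G$ is connected is at most $q\binom{n-1}{q-1}^{k-1}(kq+rL)^{k+r-2}$. (3) If $k\ge2$, $e\in\{2,\dots,k\}$ is fixed and $K_1\in\binom{[n]}{q}$ is fixed, the number of ordered $(k-2)$-tuples $(K_2,\dots,K_{e-1},K_{e+1},\dots,K_k)$ such that, with $K_e=K_1$, $G$ is connected is at most $q\binom{n-1}{q-1}^{k-2}(kq+rL)^{k+r-3}$. (4) If $k\ge1$, $r\ge1$, $f\in[r]$ is fixed and $K_1=B_f\in\binom{[n]}{q}$, the number of ordered $(k-1)$-tuples $(K_2,\dots,K_k)$ such that $G$ is connected is at most $q\binom{n-1}{q-1}^{k-1}(kq+rL)^{k+r-3}$. In cases (3) and (4), when $k+r=2$ the count is $1$. *)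

theory Defs
  imports Complex_Main
begin

definition qsets :: "nat \<Rightarrow> nat \<Rightarrow> nat set set" where
  "qsets n q = {K. K \<subseteq> {1..n} \<and> card K = q}"

definition inter_edges :: "nat set list \<Rightarrow> (nat \<times> nat) set" where
  "inter_edges S = {(i, j). i < length S \<and> j < length S \<and> i \<noteq> j \<and> S ! i \<inter> S ! j \<noteq> {}}"

definition inter_graph_connected :: "nat set list \<Rightarrow> bool" where
  "inter_graph_connected S \<longleftrightarrow>
     (\<forall>i<length S. \<forall>j<length S. (i, j) \<in> (inter_edges S)\<^sup>*)"

end

theory Submission
  imports Defs "HOL-Library.FuncSet"
begin


lemma pow_sum_binom:
  fixes a b :: real
  assumes "finite A"
  shows "(\<Sum>M\<in>Pow A. a ^ card M * b ^ card (A - M)) = (a + b) ^ card A"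
proof -
  have "(a + b) ^ card A = (\<Prod>x\<in>A. a + b)" by simp
  also have "\<dots> = (\<Sum>X\<in>Pow A. (\<Prod>x\<in>X. a) * (\<Prod>x\<in>A-X. b))"
    by (rule prod_add[OF assms])
  also have "\<dots> = (\<Sum>M\<in>Pow A. a ^ card M * b ^ card (A - M))" by simp
  finally show ?thesis by simp
qed

lemma sum_containing:
  fixes a b :: real
  assumes "finite V" "v \<in> V"
  shows "(\<Sum>N\<in>Pow V. if v \<in> N then a ^ card N * b ^ card (V - N) else 0) = a * (a + b) ^ (card V - 1)"
proof -
  let ?W = "V - {v}"
  have "(\<Sum>N\<in>Pow V. if v \<in> N then a ^ card N * b ^ card (V - N) else 0)
      = (\<Sum>N\<in>Pow V \<inter> {N. v \<in> N}. a ^ card N * b ^ card (V - N))"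
    using assms by (subst sum.inter_restrict) auto
  also have "Pow V \<inter> {N. v \<in> N} = {N\<in>Pow V. v \<in> N}" by auto
  also have "{N\<in>Pow V. v \<in> N} = insert v ` Pow ?W"
  proof
    show "{N\<in>Pow V. v \<in> N} \<subseteq> insert v ` Pow ?W"
    proof
      fix N assume "N \<in> {N\<in>Pow V. v \<in> N}"
      then show "N \<in> insert v ` Pow ?W" by (intro image_eqI[of _ _ "N - {v}"]) auto
    qed
    show "insert v ` Pow ?W \<subseteq> {N\<in>Pow V. v \<in> N}" using assms by auto
  qed
  also have "(\<Sum>N\<in>insert v ` Pow ?W. a ^ card N * b ^ card (V - N))
     = (\<Sum>M\<in>Pow ?W. a ^ card (insert v M) * b ^ card (V - insert v M))"
    by (rule sum.reindex_cong[where l="insert v"]) (auto simp: inj_on_def)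
  also have "\<dots> = (\<Sum>M\<in>Pow ?W. a * (a ^ card M * b ^ card (?W - M)))"
  proof (rule sum.cong[OF refl])
    fix M assume "M \<in> Pow ?W"
    then have "v \<notin> M" "finite M" using assms finite_subset by auto
    moreover have "V - insert v M = ?W - M" by auto
    ultimately show "a ^ card (insert v M) * b ^ card (V - insert v M) = a * (a ^ card M * b ^ card (?W - M))"
      by simp
  qed
  also have "\<dots> = a * (a + b) ^ card ?W"
    using assms by (simp add: sum_distrib_left[symmetric] pow_sum_binom)
  also have "\<dots> = a * (a + b) ^ (card V - 1)" using assms by (simp only: card_Diff_singleton)
  finally show ?thesis .
qed

lemma key_identity:
  fixes a :: real and x :: "'v \<Rightarrow> real"
  assumes "finite V" "V \<noteq> {}" "\<And>v. v \<in> V \<Longrightarrow> x v \<ge> 0" "a \<ge> 0"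
  shows "(\<Sum>N\<in>Pow V - {{}}. if N = V then a ^ card V
            else a ^ card N * sum x N * (sum x V) ^ (card V - card N - 1))
         = a * (a + sum x V) ^ (card V - 1)"
proof (cases "sum x V = 0")
  case True
  then have x0: "\<And>v. v \<in> V \<Longrightarrow> x v = 0" using assms sum_nonneg_eq_0_iff by blast
  have "(\<Sum>N\<in>Pow V - {{}}. if N = V then a ^ card V
            else a ^ card N * sum x N * (sum x V) ^ (card V - card N - 1))
       = (\<Sum>N\<in>Pow V - {{}}. if N = V then a ^ card V else 0)"
  proof (rule sum.cong[OF refl])
    fix N assume "N \<in> Pow V - {{}}"
    then have "sum x N = 0" using x0 by (intro sum.neutral) auto
    then show "(if N = V then a ^ card V
            else a ^ card N * sum x N * (sum x V) ^ (card V - card N - 1)) = (if N = V then a ^ card V else 0)" by simp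
  qed
  also have "\<dots> = a ^ card V" using assms by (simp add: sum.delta')
  also have "\<dots> = a * (a + sum x V) ^ (card V - 1)" 
  proof -
    have "card V > 0" using assms card_gt_0_iff by blast
    then have "a ^ card V = a * a ^ (card V - 1)" using power_eq_if[of a "card V"] by simp
    then show ?thesis using True by simp
  qed
  finally show ?thesis .
next
  case False
  let ?w = "sum x V"
  have "?w \<ge> 0" using assms by (simp add: sum_nonneg)
  with False have wpos: "?w > 0" by simp
  let ?T = "\<lambda>N. if N = V then a ^ card V
            else a ^ card N * sum x N * ?w ^ (card V - card N - 1)"
  have "?w * (\<Sum>N\<in>Pow V - {{}}. ?T N) = (\<Sum>N\<in>Pow V - {{}}. a ^ card N * sum x N * ?w ^ card (V - N))"
    unfolding sum_distrib_left[of "sum x V"]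
  proof (rule sum.cong[OF refl])
    fix N assume N: "N \<in> Pow V - {{}}"
    then have fin: "finite N" "N \<subseteq> V" using assms finite_subset by auto
    then have cd: "card (V - N) = card V - card N" using assms by (simp add: card_Diff_subset)
    show "?w * ?T N = a ^ card N * sum x N * ?w ^ card (V - N)"
    proof (cases "N = V")
      case True then show ?thesis by simp
    next
      case False
      then have "card N < card V" using fin assms psubset_card_mono by auto
      then have e: "card V - card N = Suc (card V - card N - 1)" by simp
      have "?w ^ (card V - card N) = ?w * ?w ^ (card V - card N - 1)" by (subst e) simp
      then show ?thesis using False cd by (simp add: mult_ac)
    qed
  qed
  also have "\<dots> = (\<Sum>N\<in>Pow V. a ^ card N * sum x N * ?w ^ card (V - N))"
    using assms by (intro sum.mono_neutral_left) auto
  also have "\<dots> = (\<Sum>N\<in>Pow V. \<Sum>v\<in>V. x v * (if v \<in> N then a ^ card N * ?w ^ card (V - N) else 0))"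
  proof (rule sum.cong[OF refl])
    fix N assume "N \<in> Pow V"
    then have NV: "N \<subseteq> V" by auto
    have "sum x N = sum x (V \<inter> N)" using NV by (simp add: Int_absorb1)
    also have "\<dots> = (\<Sum>v\<in>V. if v \<in> N then x v else 0)" using assms(1) by (rule sum.inter_restrict)
    finally have sx: "sum x N = (\<Sum>v\<in>V. if v \<in> N then x v else 0)" .
    have "a ^ card N * sum x N * ?w ^ card (V - N) = (\<Sum>v\<in>V. (if v \<in> N then x v else 0) * (a ^ card N * ?w ^ card (V - N)))"
    proof -
      have "a ^ card N * sum x N * ?w ^ card (V - N) = sum x N * (a ^ card N * ?w ^ card (V - N))" by (simp only: mult_ac)
      also have "\<dots> = (\<Sum>v\<in>V. (if v \<in> N then x v else 0) * (a ^ card N * ?w ^ card (V - N)))"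
        unfolding sx by (rule sum_distrib_right)
      finally show ?thesis .
    qed
    also have "\<dots> = (\<Sum>v\<in>V. x v * (if v \<in> N then a ^ card N * ?w ^ card (V - N) else 0))"
      by (intro sum.cong[OF refl]) simp
    finally show "a ^ card N * sum x N * ?w ^ card (V - N) = (\<Sum>v\<in>V. x v * (if v \<in> N then a ^ card N * ?w ^ card (V - N) else 0))" .
  qed
  also have "\<dots> = (\<Sum>v\<in>V. x v * (\<Sum>N\<in>Pow V. if v \<in> N then a ^ card N * ?w ^ card (V - N) else 0))"
    by (subst sum.swap) (simp only: sum_distrib_left)
  also have "\<dots> = (\<Sum>v\<in>V. x v * (a * (a + ?w) ^ (card V - 1)))"
    using assms by (intro sum.cong[OF refl]) (simp add: sum_containing)
  also have "\<dots> = ?w * (a * (a + ?w) ^ (card V - 1))" by (simp add: sum_distrib_right)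
  finally show ?thesis using wpos by simp
qed



inductive reach :: "'a set \<Rightarrow> ('v \<Rightarrow> 'a set) \<Rightarrow> 'v set \<Rightarrow> 'v \<Rightarrow> bool" for U S V where
  base: "v \<in> V \<Longrightarrow> S v \<inter> U \<noteq> {} \<Longrightarrow> reach U S V v"
| step: "reach U S V u \<Longrightarrow> v \<in> V \<Longrightarrow> S u \<inter> S v \<noteq> {} \<Longrightarrow> reach U S V v"

lemma reach_cong:
  assumes "reach U S V v" "\<And>v. v \<in> V \<Longrightarrow> S v = S' v"
  shows "reach U S' V v"
  using assms(1)
proof induction
  case (base v) then show ?case using assms(2) by (auto intro: reach.base)
next
  case (step u v) then show ?case using assms(2) reach.step
    by (metis reach.cases)
qed

lemma reach_in: "reach U S V v \<Longrightarrow> v \<in> V"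
  by (induction rule: reach.induct) auto

lemma reach_exists_base: "reach U S V v \<Longrightarrow> \<exists>u\<in>V. S u \<inter> U \<noteq> {}"
  by (induction rule: reach.induct) auto

lemma reach_layer:
  assumes "reach U S V v" "v \<notin> N" "N = {v\<in>V. S v \<inter> U \<noteq> {}}"
  shows "reach (\<Union>w\<in>N. S w) S (V - N) v"
  using assms(1,2)
proof induction
  case (base v) then show ?case using assms(3) by auto
next
  case (step u v)
  show ?case
  proof (cases "u \<in> N")
    case True
    then have "S v \<inter> (\<Union>w\<in>N. S w) \<noteq> {}" using step by blast
    then show ?thesis using step by (auto intro: reach.base)
  next
    case False
    then show ?thesis using step by (auto intro: reach.step)
  qed
qed

definition SS :: "'v set \<Rightarrow> ('v \<Rightarrow> nat set) \<Rightarrow> ('v \<Rightarrow> nat set) \<Rightarrow> 'v \<Rightarrow> nat set" where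
  "SS I f B v = (if v \<in> I then f v else B v)"

definition cfgs :: "nat \<Rightarrow> nat \<Rightarrow> nat set \<Rightarrow> 'v set \<Rightarrow> ('v \<Rightarrow> nat set) \<Rightarrow> 'v set \<Rightarrow> ('v \<Rightarrow> nat set) set" where
  "cfgs n q U I B V = {f \<in> PiE I (\<lambda>_. qsets n q). \<forall>v\<in>V. reach U (SS I f B) V v}"

lemma finite_qsets: "finite (qsets n q)"
  unfolding qsets_def by (rule finite_subset[of _ "Pow {1..n}"]) auto

lemma qsets_finite_el: "K \<in> qsets n q \<Longrightarrow> finite K"
  unfolding qsets_def using finite_subset by auto

lemma card_containing:
  "card {K\<in>qsets n q. u \<in> K} \<le> n - 1 choose (q - 1)"
proof (cases "u \<in> {1..n}")
  case False
  then have "{K\<in>qsets n q. u \<in> K} = {}" unfolding qsets_def by auto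
  then show ?thesis by (metis card.empty zero_le)
next
  case True
  let ?T = "{B. B \<subseteq> {1..n} - {u} \<and> card B = q - 1}"
  have "inj_on (\<lambda>K. K - {u}) {K\<in>qsets n q. u \<in> K}"
    by (rule inj_onI) (metis (no_types, lifting) insert_Diff mem_Collect_eq)
  moreover have "(\<lambda>K. K - {u}) ` {K\<in>qsets n q. u \<in> K} \<subseteq> ?T"
    unfolding qsets_def using finite_subset by (auto simp: card_Diff_singleton)
  moreover have "finite ?T" by (rule finite_subset[of _ "Pow {1..n}"]) auto
  ultimately have "card {K\<in>qsets n q. u \<in> K} \<le> card ?T" by (rule card_inj_on_le)
  also have "card ?T = n - 1 choose (q - 1)" using True by (subst n_subsets) auto
  finally show ?thesis .
qed

lemma card_meeting:
  assumes "finite U"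
  shows "card {K\<in>qsets n q. K \<inter> U \<noteq> {}} \<le> card U * (n - 1 choose (q - 1))"
proof -
  have "{K\<in>qsets n q. K \<inter> U \<noteq> {}} = (\<Union>u\<in>U. {K\<in>qsets n q. u \<in> K})" by auto
  then have "card {K\<in>qsets n q. K \<inter> U \<noteq> {}} \<le> (\<Sum>u\<in>U. card {K\<in>qsets n q. u \<in> K})"
    using card_UN_le[OF assms] by simp
  also have "\<dots> \<le> (\<Sum>u\<in>U. n - 1 choose (q - 1))" by (intro sum_mono card_containing)
  finally show ?thesis by simp
qed



lemma sumx_lemma:
  assumes "finite V" "I \<subseteq> V"
  shows "(\<Sum>v\<in>V. if v \<in> I then real q else real (card (B v))) = real (q * card I + (\<Sum>v\<in>V-I. card (B v)))"
proof -
  let ?x = "\<lambda>v. if v \<in> I then real q else real (card (B v))"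
  have "sum ?x V = sum ?x (V - I) + sum ?x I" by (rule sum.subset_diff[OF assms(2,1)])
  also have "sum ?x I = (\<Sum>v\<in>I. real q)" by (rule sum.cong) auto
  also have "sum ?x (V - I) = (\<Sum>v\<in>V-I. real (card (B v)))" by (rule sum.cong) auto
  finally show ?thesis using assms finite_subset by (simp add: of_nat_sum)
qed

lemma finite_cfgs: "finite I \<Longrightarrow> finite (cfgs n q U I B V)"
  unfolding cfgs_def by (rule finite_subset[of _ "PiE I (\<lambda>_. qsets n q)"]) (auto intro!: finite_PiE finite_qsets)

lemma cfgs_empty_U: "V \<noteq> {} \<Longrightarrow> cfgs n q {} I B V = {}"
  unfolding cfgs_def using reach_exists_base by fastforce

lemma core:
  fixes V I :: "'v set" and B :: "'v \<Rightarrow> nat set" and U :: "nat set"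
  assumes "finite V" "I \<subseteq> V" "V \<noteq> {}" "finite U" "\<forall>v\<in>V-I. finite (B v)"
  shows "real (card (cfgs n q U I B V)) \<le> real (n - 1 choose (q - 1)) ^ card I * real (card U)
           * (real (card U) + real (q * card I + (\<Sum>v\<in>V-I. card (B v)))) ^ (card V - 1)"
  using assms
proof (induction "card V" arbitrary: V I U rule: less_induct)
  case less
  note finV = less.prems(1) and IV = less.prems(2) and Vne = less.prems(3)
    and finU = less.prems(4) and finB = less.prems(5)
  have finI: "finite I" using finV IV finite_subset by auto
  define C where "C = real (n - 1 choose (q - 1))"
  define a where "a = real (card U)"
  define x where "x = (\<lambda>v. if v \<in> I then real q else real (card (B v)))"
  define X where "X = cfgs n q U I B V"
  have sumx: "sum x V = real (q * card I + (\<Sum>v\<in>V-I. card (B v)))"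
    unfolding x_def using finV IV by (rule sumx_lemma)
  have xnn: "\<And>v. x v \<ge> 0" unfolding x_def by auto
  have Cnn: "C \<ge> 0" unfolding C_def by simp
  have ann: "a \<ge> 0" unfolding a_def by simp
  show ?case
  proof (cases "U = {}")
    case True
    have "card (cfgs n q U I B V) = 0" using cfgs_empty_U[OF Vne] True by simp
    then show ?thesis using True by simp
  next
    case False
    have "card U > 0" using False finU card_gt_0_iff by blast
    then have a1: "a \<ge> 1" unfolding a_def by simp
    define Nf where "Nf = (\<lambda>f. {v\<in>V. SS I f B v \<inter> U \<noteq> {}})"
    define XN where "XN = (\<lambda>N. {f\<in>X. Nf f = N})"
    have finX: "finite X" unfolding X_def using finI by (rule finite_cfgs)
    have Xeq: "X = (\<Union>N\<in>Pow V - {{}}. XN N)"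
    proof
      show "X \<subseteq> (\<Union>N\<in>Pow V - {{}}. XN N)"
      proof
        fix f assume f: "f \<in> X"
        obtain v where v: "v \<in> V" using Vne by blast
        have "\<forall>v\<in>V. reach U (SS I f B) V v" using f unfolding X_def cfgs_def by simp
        then have "reach U (SS I f B) V v" using v by blast
        then obtain u where u: "u \<in> V" "SS I f B u \<inter> U \<noteq> {}" using reach_exists_base by metis
        have "Nf f \<subseteq> V" unfolding Nf_def by blast
        moreover have "u \<in> Nf f" unfolding Nf_def using u by blast
        ultimately have "Nf f \<in> Pow V - {{}}" by blast
        then show "f \<in> (\<Union>N\<in>Pow V - {{}}. XN N)" using f unfolding XN_def by auto
      qed
      show "(\<Union>N\<in>Pow V - {{}}. XN N) \<subseteq> X" unfolding XN_def by auto
    qed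
    let ?T = "\<lambda>N. if N = V then a ^ card V else a ^ card N * sum x N * (sum x V) ^ (card V - card N - 1)"
    define Qm where "Qm = {K\<in>qsets n q. K \<inter> U \<noteq> {}}"
    have cQm: "real (card Qm) \<le> a * C"
    proof -
      have "card Qm \<le> card U * (n - 1 choose (q - 1))" unfolding Qm_def using finU by (rule card_meeting)
      then show ?thesis unfolding a_def C_def by (metis of_nat_le_iff of_nat_mult)
    qed
    have XN_sub: "XN N \<subseteq> X" for N unfolding XN_def by blast
    have bnd: "real (card (XN N)) \<le> C ^ card I * ?T N" if N: "N \<in> Pow V - {{}}" for N
    proof (cases "N = V")
      case True
      have "XN N \<subseteq> PiE I (\<lambda>_. Qm)"
      proof
        fix f assume f: "f \<in> XN N"
        then have fX: "f \<in> PiE I (\<lambda>_. qsets n q)" unfolding XN_def X_def cfgs_def by blast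
        have NfV: "Nf f = V" using f True unfolding XN_def by blast
        have "f i \<in> Qm" if i: "i \<in> I" for i
        proof -
          have "i \<in> Nf f" using NfV i IV by blast
          then have "SS I f B i \<inter> U \<noteq> {}" unfolding Nf_def by blast
          then have "f i \<inter> U \<noteq> {}" using i unfolding SS_def by simp
          moreover have "f i \<in> qsets n q" using fX i by blast
          ultimately show ?thesis unfolding Qm_def by blast
        qed
        then show "f \<in> PiE I (\<lambda>_. Qm)" using fX by (auto simp: PiE_iff)
      qed
      moreover have "finite (PiE I (\<lambda>_. Qm))" using finI finite_qsets unfolding Qm_def
        by (intro finite_PiE) auto
      ultimately have "card (XN N) \<le> card (PiE I (\<lambda>_. Qm))" by (rule card_mono[rotated])
      also have "\<dots> = card Qm ^ card I" using finI by (simp add: card_PiE)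
      finally have "real (card (XN N)) \<le> real (card Qm) ^ card I" by (metis of_nat_le_iff of_nat_power)
      also have "\<dots> \<le> (a * C) ^ card I" using cQm by (intro power_mono) auto
      also have "\<dots> = a ^ card I * C ^ card I" by (simp add: power_mult_distrib)
      also have "\<dots> \<le> a ^ card V * C ^ card I"
      proof -
        have "card I \<le> card V" using finV IV by (rule card_mono)
        then have "a ^ card I \<le> a ^ card V" using a1 by (rule power_increasing)
        then show ?thesis using Cnn by (intro mult_right_mono) auto
      qed
      finally show ?thesis using True by (simp add: mult_ac)
    next
      case False
      have NV: "N \<subseteq> V" and Nne: "N \<noteq> {}" using N by auto
      have finN: "finite N" using finV NV finite_subset by auto
      define G where "G = PiE (I \<inter> N) (\<lambda>_. Qm)"
      define U' where "U' = (\<lambda>g. \<Union>v\<in>N. SS (I \<inter> N) g B v)"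
      define H where "H = (\<lambda>g. cfgs n q (U' g) (I - N) B (V - N))"
      define psi where "psi = (\<lambda>f::'v \<Rightarrow> nat set. (restrict f (I \<inter> N), restrict f (I - N)))"
      let ?e = "card V - card N - 1"
      have finQm: "finite Qm" unfolding Qm_def by (rule finite_subset[OF _ finite_qsets]) blast
      have finG: "finite G" unfolding G_def using finI finQm by (intro finite_PiE) auto
      have finIN: "finite (I - N)" using finI by blast
      have finH: "finite (H g)" for g unfolding H_def using finIN by (rule finite_cfgs)
      have inj: "inj_on psi (XN N)"
      proof (rule inj_onI)
        fix f f' assume f: "f \<in> XN N" and f': "f' \<in> XN N" and eq: "psi f = psi f'"
        have "f \<in> PiE I (\<lambda>_. qsets n q)" "f' \<in> PiE I (\<lambda>_. qsets n q)"
          using f f' unfolding XN_def X_def cfgs_def by blast+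
        then have fE: "f \<in> extensional I" "f' \<in> extensional I" unfolding PiE_iff by blast+
        show "f = f'"
        proof
          fix y
          show "f y = f' y"
          proof (cases "y \<in> I")
            case True
            show ?thesis
            proof (cases "y \<in> N")
              case True
              then show ?thesis using eq \<open>y \<in> I\<close> unfolding psi_def by (metis IntI restrict_apply' prod.inject)
            next
              case False
              then show ?thesis using eq \<open>y \<in> I\<close> unfolding psi_def by (metis DiffI restrict_apply' prod.inject)
            qed
          next
            case False
            then show ?thesis using fE extensional_arb by metis
          qed
        qed
      qed
      have img: "psi ` XN N \<subseteq> Sigma G H"
      proof
        fix p assume "p \<in> psi ` XN N"
        then obtain f where f: "f \<in> XN N" and p: "p = psi f" by blast
        have fP: "f \<in> PiE I (\<lambda>_. qsets n q)" and fR: "\<forall>v\<in>V. reach U (SS I f B) V v"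
          using f unfolding XN_def X_def cfgs_def by auto
        have Nf: "N = {v\<in>V. SS I f B v \<inter> U \<noteq> {}}" using f unfolding XN_def Nf_def by blast
        define g where "g = restrict f (I \<inter> N)"
        define h where "h = restrict f (I - N)"
        have gG: "g \<in> G"
        proof -
          have "f i \<in> Qm" if i: "i \<in> I \<inter> N" for i
          proof -
            have "SS I f B i \<inter> U \<noteq> {}" using i Nf by blast
            then have "f i \<inter> U \<noteq> {}" using i unfolding SS_def by simp
            moreover have "f i \<in> qsets n q" using fP i by blast
            ultimately show ?thesis unfolding Qm_def by blast
          qed
          then show ?thesis unfolding G_def g_def by auto
        qed
        have hP: "h \<in> PiE (I - N) (\<lambda>_. qsets n q)" using fP unfolding h_def by auto
        have SSg: "SS (I \<inter> N) g B v = SS I f B v" if "v \<in> N" for v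
          using that unfolding SS_def g_def by auto
        have SSh: "SS (I - N) h B v = SS I f B v" if "v \<in> V - N" for v
          using that unfolding SS_def h_def by auto
        have U'eq: "U' g = (\<Union>v\<in>N. SS I f B v)" unfolding U'_def using SSg by simp
        have "reach (U' g) (SS (I - N) h B) (V - N) v" if v: "v \<in> V - N" for v
        proof -
          have "reach U (SS I f B) V v" using fR v by blast
          then have "reach (\<Union>w\<in>N. SS I f B w) (SS I f B) (V - N) v"
            using v Nf by (intro reach_layer) auto
          then have "reach (U' g) (SS I f B) (V - N) v" unfolding U'eq .
          then show ?thesis by (rule reach_cong) (simp add: SSh)
        qed
        then have "h \<in> H g" unfolding H_def cfgs_def using hP by blast
        then show "p \<in> Sigma G H" using gG p unfolding psi_def g_def h_def by blast
      qed
      have "card (XN N) \<le> card (Sigma G H)"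
        using card_inj_on_le[OF inj img finite_SigmaI[OF finG finH]] .
      also have "\<dots> = (\<Sum>g\<in>G. card (H g))" using finG finH by simp
      finally have c1: "real (card (XN N)) \<le> (\<Sum>g\<in>G. real (card (H g)))"
        unfolding of_nat_sum[symmetric] of_nat_le_iff .
      have VN: "V - N \<subset> V" using NV Nne by blast
      have cVN: "card (V - N) = card V - card N" using finN NV by (rule card_Diff_subset)
      have VNne: "V - N \<noteq> {}" using NV False by blast
      have sxsplit: "sum x V = sum x (V - N) + sum x N" by (rule sum.subset_diff[OF NV finV])
      have sxVN: "real (q * card (I - N) + (\<Sum>v\<in>(V - N) - (I - N). card (B v))) = sum x (V - N)"
      proof -
        have "real (q * card (I - N) + (\<Sum>v\<in>(V - N) - (I - N). card (B v)))
            = (\<Sum>v\<in>V - N. if v \<in> I - N then real q else real (card (B v)))"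
          by (rule sumx_lemma[symmetric]) (use finV IV in auto)
        also have "\<dots> = sum x (V - N)" unfolding x_def by (rule sum.cong) auto
        finally show ?thesis .
      qed
      have hb: "real (card (H g)) \<le> C ^ card (I - N) * (sum x N * sum x V ^ ?e)" if g: "g \<in> G" for g
      proof -
        have gQ: "g v \<in> qsets n q" if "v \<in> I \<inter> N" for v
          using g that unfolding G_def Qm_def by blast
        have finSS: "finite (SS (I \<inter> N) g B v)" if "v \<in> N" for v
        proof (cases "v \<in> I")
          case True then show ?thesis using gQ[of v] that qsets_finite_el unfolding SS_def by simp
        next
          case False then show ?thesis using finB that NV unfolding SS_def by auto
        qed
        have finU': "finite (U' g)" unfolding U'_def using finN finSS by blast
        have "card (U' g) \<le> (\<Sum>v\<in>N. card (SS (I \<inter> N) g B v))"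
          unfolding U'_def using finN by (rule card_UN_le)
        then have "real (card (U' g)) \<le> (\<Sum>v\<in>N. real (card (SS (I \<inter> N) g B v)))"
          unfolding of_nat_sum[symmetric] of_nat_le_iff .
        also have "\<dots> = sum x N"
        proof (rule sum.cong[OF refl])
          fix v assume v: "v \<in> N"
          show "real (card (SS (I \<inter> N) g B v)) = x v"
          proof (cases "v \<in> I")
            case True
            then have "card (g v) = q" using gQ v unfolding qsets_def by blast
            then show ?thesis using True v unfolding SS_def x_def by simp
          next
            case False then show ?thesis unfolding SS_def x_def by simp
          qed
        qed
        finally have cU': "real (card (U' g)) \<le> sum x N" .
        have t0: "0 \<le> sum x (V - N)" using xnn by (simp add: sum_nonneg)
        have IH: "real (card (cfgs n q (U' g) (I - N) B (V - N))) \<le> C ^ card (I - N) * real (card (U' g))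
           * (real (card (U' g)) + real (q * card (I - N) + (\<Sum>v\<in>(V - N) - (I - N). card (B v)))) ^ (card (V - N) - 1)"
          unfolding C_def
        proof (rule less.hyps)
          show "card (V - N) < card V" using psubset_card_mono[OF finV VN] .
          show "finite (V - N)" using finV by blast
          show "I - N \<subseteq> V - N" using IV by blast
          show "V - N \<noteq> {}" by (rule VNne)
          show "finite (U' g)" by (rule finU')
          show "\<forall>v\<in>V - N - (I - N). finite (B v)" using finB by blast
        qed
        have "real (card (H g)) \<le> C ^ card (I - N) * real (card (U' g)) * (real (card (U' g)) + sum x (V - N)) ^ ?e"
          using IH unfolding H_def sxVN cVN .
        also have "\<dots> \<le> C ^ card (I - N) * sum x N * (sum x N + sum x (V - N)) ^ ?e"
        proof -
          have "real (card (U' g)) * (real (card (U' g)) + sum x (V - N)) ^ ?e \<le> sum x N * (sum x N + sum x (V - N)) ^ ?e"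
            using cU' xnn t0 by (intro mult_mono power_mono zero_le_power add_nonneg_nonneg) auto
          then show ?thesis using Cnn by (simp add: mult.assoc mult_left_mono)
        qed
        also have "\<dots> = C ^ card (I - N) * (sum x N * sum x V ^ ?e)" by (simp add: sxsplit mult.assoc add.commute)
        finally show ?thesis .
      qed
      have K: "0 \<le> C ^ card (I - N) * (sum x N * sum x V ^ ?e)"
        using Cnn xnn by (simp add: sum_nonneg)
      have "(\<Sum>g\<in>G. real (card (H g))) \<le> (\<Sum>g\<in>G. C ^ card (I - N) * (sum x N * sum x V ^ ?e))"
        by (rule sum_mono) (rule hb)
      also have "\<dots> = real (card G) * (C ^ card (I - N) * (sum x N * sum x V ^ ?e))" by simp
      finally have c1': "real (card (XN N)) \<le> real (card G) * (C ^ card (I - N) * (sum x N * sum x V ^ ?e))"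
        using c1 by linarith
      have "real (card G) = real (card Qm) ^ card (I \<inter> N)"
        unfolding G_def using finI by (simp add: card_PiE)
      also have "\<dots> \<le> (a * C) ^ card (I \<inter> N)" using cQm by (intro power_mono) auto
      finally have "real (card G) \<le> (a * C) ^ card (I \<inter> N)" .
      then have c2: "real (card (XN N)) \<le> (a * C) ^ card (I \<inter> N) * (C ^ card (I - N) * (sum x N * sum x V ^ ?e))"
        using c1' K by (meson mult_right_mono order_trans)
      have "card I = card (I \<inter> N) + card (I - N)" using finI by (rule card_Int_Diff)
      then have CI: "C ^ card I = C ^ card (I \<inter> N) * C ^ card (I - N)" by (simp add: power_add)
      have K2: "0 \<le> C ^ card I * (sum x N * sum x V ^ ?e)"
        using Cnn xnn by (simp add: sum_nonneg)
      have aN: "a ^ card (I \<inter> N) \<le> a ^ card N"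
        using a1 by (intro power_increasing card_mono finN) auto
      have "(a * C) ^ card (I \<inter> N) * (C ^ card (I - N) * (sum x N * sum x V ^ ?e))
          = a ^ card (I \<inter> N) * (C ^ card I * (sum x N * sum x V ^ ?e))"
        unfolding CI power_mult_distrib by (simp add: mult_ac)
      also have "\<dots> \<le> a ^ card N * (C ^ card I * (sum x N * sum x V ^ ?e))"
        using aN K2 by (rule mult_right_mono)
      also have "\<dots> = C ^ card I * ?T N" using False by (simp add: mult_ac)
      finally show ?thesis using c2 by linarith
    qed
    have "card X \<le> (\<Sum>N\<in>Pow V - {{}}. card (XN N))"
      unfolding Xeq using finV by (intro card_UN_le) auto
    then have "real (card X) \<le> (\<Sum>N\<in>Pow V - {{}}. real (card (XN N)))"
      by (metis of_nat_le_iff of_nat_sum)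
    also have "\<dots> \<le> (\<Sum>N\<in>Pow V - {{}}. C ^ card I * ?T N)"
      by (rule sum_mono) (rule bnd)
    also have "\<dots> = C ^ card I * (\<Sum>N\<in>Pow V - {{}}. ?T N)" by (simp add: sum_distrib_left)
    also have "(\<Sum>N\<in>Pow V - {{}}. ?T N) = a * (a + sum x V) ^ (card V - 1)"
      using finV Vne xnn ann by (intro key_identity) auto
    finally have "real (card X) \<le> C ^ card I * (a * (a + sum x V) ^ (card V - 1))" .
    then show ?thesis unfolding X_def C_def a_def sumx by (simp only: mult.assoc)
  qed
qed



lemma inter_edges_sym: "(a, b) \<in> inter_edges L \<Longrightarrow> (b, a) \<in> inter_edges L"
  unfolding inter_edges_def by auto

lemma rtrancl_sym_inter: "(a, b) \<in> (inter_edges L)\<^sup>* \<Longrightarrow> (b, a) \<in> (inter_edges L)\<^sup>*"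
proof (induction rule: rtrancl_induct)
  case base then show ?case by simp
next
  case (step y z)
  have "(z, y) \<in> inter_edges L" by (rule inter_edges_sym[OF step.hyps(2)])
  then show ?case by (rule converse_rtrancl_into_rtrancl[OF _ step.IH])
qed

lemma conn_imp_reach:
  assumes conn: "inter_graph_connected L" and r: "rt < length L"
    and D: "\<And>d. d \<in> D \<Longrightarrow> L ! d = L ! rt"
    and u: "u \<in> {..<length L} - {rt} - D"
  shows "reach (L ! rt) (nth L) ({..<length L} - {rt} - D) u"
proof -
  let ?V = "{..<length L} - {rt} - D"
  have "(rt, u) \<in> (inter_edges L)\<^sup>*" using conn r u unfolding inter_graph_connected_def by blast
  have "y \<in> {rt} \<union> D \<or> reach (L ! rt) (nth L) ?V y" if "(rt, y) \<in> (inter_edges L)\<^sup>*" for y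
    using that
  proof (induction rule: rtrancl_induct)
    case base then show ?case by simp
  next
    case (step y z)
    have z: "z < length L" "L ! y \<inter> L ! z \<noteq> {}" using step.hyps(2) unfolding inter_edges_def by auto
    show ?case
    proof (cases "z \<in> {rt} \<union> D")
      case True then show ?thesis by simp
    next
      case False
      then have zV: "z \<in> ?V" using z by auto
      show ?thesis
      proof (cases "y \<in> {rt} \<union> D")
        case True
        then have "L ! y = L ! rt" using D by auto
        then have "L ! z \<inter> L ! rt \<noteq> {}" using z by auto
        then show ?thesis using zV by (auto intro: reach.base)
      next
        case False
        then have "reach (L ! rt) (nth L) ?V y" using step.IH by simp
        then show ?thesis using zV z by (auto intro: reach.step)
      qed
    qed
  qed
  then show ?thesis using \<open>(rt, u) \<in> _\<close> u by blast
qed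

lemma reach_imp_conn:
  assumes r: "rt < length L" and D: "\<And>d. d \<in> D \<Longrightarrow> L ! d = L ! rt" and Dsub: "D \<subseteq> {..<length L}"
    and ne: "D \<noteq> {} \<Longrightarrow> L ! rt \<noteq> {}"
    and R: "\<And>u. u \<in> {..<length L} - {rt} - D \<Longrightarrow> reach (L ! rt) (nth L) ({..<length L} - {rt} - D) u"
  shows "inter_graph_connected L"
proof -
  let ?V = "{..<length L} - {rt} - D"
  let ?E = "inter_edges L"
  have rv: "(rt, v) \<in> ?E\<^sup>*" if "reach (L ! rt) (nth L) ?V v" for v
    using that
  proof (induction rule: reach.induct)
    case (base v)
    then have "(rt, v) \<in> ?E" using r unfolding inter_edges_def by auto
    then show ?case by blast
  next
    case (step u v)
    have uV: "u \<in> ?V" using step.hyps(1) by (rule reach_in)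
    show ?case
    proof (cases "u = v")
      case True then show ?thesis using step.IH by simp
    next
      case False
      then have "(u, v) \<in> ?E" using uV step.hyps unfolding inter_edges_def by auto
      then show ?thesis by (rule rtrancl_into_rtrancl[OF step.IH])
    qed
  qed
  have all: "(rt, i) \<in> ?E\<^sup>*" if i: "i < length L" for i
  proof (cases "i = rt")
    case True then show ?thesis by simp
  next
    case False
    show ?thesis
    proof (cases "i \<in> D")
      case True
      then have "L ! i = L ! rt" "L ! rt \<noteq> {}" using D ne by auto
      then have "(rt, i) \<in> ?E" using i r False unfolding inter_edges_def by auto
      then show ?thesis by blast
    next
      case iD: False
      then have "i \<in> ?V" using i False by auto
      then show ?thesis using R rv by blast
    qed
  qed
  show ?thesis unfolding inter_graph_connected_def
  proof (intro allI impI)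
    fix i j assume "i < length L" "j < length L"
    then have "(i, rt) \<in> ?E\<^sup>*" "(rt, j) \<in> ?E\<^sup>*" using all rtrancl_sym_inter by blast+
    then show "(i, j) \<in> ?E\<^sup>*" by (rule rtrancl_trans)
  qed
qed

lemma card_le_cfgs:
  assumes inj: "inj_on phi A" and finI: "finite I"
    and P: "\<And>Ks. Ks \<in> A \<Longrightarrow> phi Ks \<in> PiE I (\<lambda>_. qsets n q)"
    and S: "\<And>Ks v. Ks \<in> A \<Longrightarrow> v \<in> V \<Longrightarrow> SS I (phi Ks) B v = S Ks v"
    and R: "\<And>Ks v. Ks \<in> A \<Longrightarrow> v \<in> V \<Longrightarrow> reach U (S Ks) V v"
  shows "card A \<le> card (cfgs n q U I B V)"
proof (rule card_inj_on_le[OF inj _ finite_cfgs[OF finI]])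
  show "phi ` A \<subseteq> cfgs n q U I B V"
  proof
    fix p assume "p \<in> phi ` A"
    then obtain Ks where Ks: "Ks \<in> A" and p: "p = phi Ks" by blast
    have "reach U (SS I (phi Ks) B) V v" if "v \<in> V" for v
      using R[OF Ks that] by (rule reach_cong) (simp add: S[OF Ks])
    then show "p \<in> cfgs n q U I B V" unfolding cfgs_def p using P[OF Ks] by blast
  qed
qed

lemma inj_restrict_nth:
  assumes "\<And>Ks. Ks \<in> A \<Longrightarrow> length Ks = l" "\<And>t. t < l \<Longrightarrow> pos t \<in> I"
    "\<And>Ks t. Ks \<in> A \<Longrightarrow> t < l \<Longrightarrow> LL Ks ! pos t = Ks ! t"
  shows "inj_on (\<lambda>Ks. restrict (\<lambda>i. LL Ks ! i) I) A"
proof (rule inj_onI)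
  fix Ks Ks' assume K: "Ks \<in> A" "Ks' \<in> A" and eq: "restrict (\<lambda>i. LL Ks ! i) I = restrict (\<lambda>i. LL Ks' ! i) I"
  show "Ks = Ks'"
  proof (rule nth_equalityI)
    show "length Ks = length Ks'" using assms(1) K by simp
    fix t assume "t < length Ks"
    then have t: "t < l" using assms(1) K by simp
    have "LL Ks ! pos t = LL Ks' ! pos t" using fun_cong[OF eq, of "pos t"] assms(2)[OF t] by simp
    then show "Ks ! t = Ks' ! t" using assms(3) K t by simp
  qed
qed



lemma sumB_bound:
  assumes "\<And>v. v \<in> W \<Longrightarrow> B v \<in> set Bs" "\<forall>X\<in>set Bs. X \<subseteq> {1..n} \<and> card X \<le> L"
  shows "(\<Sum>v\<in>W. card (B v)) \<le> card W * L"
proof -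
  have "(\<Sum>v\<in>W. card (B v)) \<le> (\<Sum>v\<in>W. L)" using assms by (intro sum_mono) blast
  then show ?thesis by simp
qed

lemma final_ineq:
  fixes C :: real
  assumes "c \<le> C ^ a * real q * (real q + real w) ^ e" "q + w \<le> M" "C \<ge> 0"
  shows "c \<le> real q * C ^ a * real M ^ e"
proof -
  have "(real q + real w) ^ e \<le> real M ^ e" using assms(2) by (intro power_mono) auto
  then have "C ^ a * real q * (real q + real w) ^ e \<le> C ^ a * real q * real M ^ e"
    using assms(3) by (intro mult_left_mono) auto
  then show ?thesis using assms(1) by (simp add: mult_ac)
qed

lemma part2:
  assumes q1: "1 \<le> q" and "length Bs = r" and Bs: "\<forall>B\<in>set Bs. B \<subseteq> {1..n} \<and> card B \<le> L"
    and k1: "k \<ge> 1" and K1: "K1 \<in> qsets n q"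
  shows "real (card {Ks. length Ks = k - 1 \<and> set Ks \<subseteq> qsets n q \<and> inter_graph_connected ((K1 # Ks) @ Bs)})
      \<le> real q * real (n - 1 choose (q - 1)) ^ (k - 1) * real (k * q + r * L) powi (int (k + r) - 2)"
proof -
  let ?A = "{Ks. length Ks = k - 1 \<and> set Ks \<subseteq> qsets n q \<and> inter_graph_connected ((K1 # Ks) @ Bs)}"
  let ?C = "real (n - 1 choose (q - 1))"
  let ?M = "k * q + r * L"
  define LL where "LL = (\<lambda>Ks. (K1 # Ks) @ Bs)"
  have cK1: "card K1 = q" using K1 unfolding qsets_def by blast
  show ?thesis
  proof (cases "k + r = 1")
    case True
    then have kr: "k = 1" "r = 0" using k1 by auto
    have "?A \<subseteq> {[]}" using kr by auto
    then have "card ?A \<le> card {[]::nat set list}" by (rule card_mono[rotated]) simp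
    then have "card ?A \<le> 1" by simp
    moreover have "real q * ?C ^ (k - 1) * real ?M powi (int (k + r) - 2) = 1"
      using kr q1 by (simp add: power_int_minus)
    ultimately show ?thesis by simp
  next
    case False
    then have kr2: "k + r \<ge> 2" using k1 by auto
    define I where "I = {1..<k}"
    define V where "V = {..<k + r} - {0} - ({}::nat set)"
    define B where "B = (\<lambda>v. Bs ! (v - k))"
    define phi where "phi = (\<lambda>Ks. restrict (\<lambda>i. LL Ks ! i) I)"
    have lenLL: "length (LL Ks) = k + r" if "length Ks = k - 1" for Ks
      using that k1 \<open>length Bs = r\<close> unfolding LL_def by simp
    have VI: "V - I = {k..<k + r}" unfolding V_def I_def using k1 by auto
    have IV: "I \<subseteq> V" unfolding V_def I_def by auto
    have "card ?A \<le> card (cfgs n q K1 I B V)"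
    proof (rule card_le_cfgs[where phi = phi and S = "\<lambda>Ks. nth (LL Ks)"])
      show "inj_on phi ?A" unfolding phi_def
        by (rule inj_restrict_nth[where l = "k - 1" and pos = Suc]) (auto simp: I_def LL_def nth_append)
      show "finite I" unfolding I_def by simp
      show "phi Ks \<in> PiE I (\<lambda>_. qsets n q)" if "Ks \<in> ?A" for Ks
      proof -
        have "LL Ks ! i \<in> qsets n q" if "i \<in> I" for i
        proof -
          have "LL Ks ! i = Ks ! (i - 1)" using that \<open>Ks \<in> ?A\<close> unfolding LL_def I_def by (auto simp: nth_append)
          moreover have "Ks ! (i - 1) \<in> set Ks" using that \<open>Ks \<in> ?A\<close> unfolding I_def by auto
          ultimately show ?thesis using \<open>Ks \<in> ?A\<close> by auto
        qed
        then show ?thesis unfolding phi_def by auto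
      qed
      show "SS I (phi Ks) B v = LL Ks ! v" if "Ks \<in> ?A" "v \<in> V" for Ks v
      proof (cases "v \<in> I")
        case True then show ?thesis unfolding SS_def phi_def by simp
      next
        case False
        then have "v \<ge> k" using that(2) unfolding V_def I_def by auto
        then show ?thesis using False that(1) k1 unfolding SS_def B_def LL_def by (auto simp: nth_append)
      qed
      show "reach K1 (nth (LL Ks)) V v" if "Ks \<in> ?A" "v \<in> V" for Ks v
      proof -
        have len: "length (LL Ks) = k + r" using that(1) lenLL by simp
        have conn: "inter_graph_connected (LL Ks)" using that(1) unfolding LL_def by simp
        have "reach (LL Ks ! 0) (nth (LL Ks)) ({..<length (LL Ks)} - {0} - {}) v"
          by (rule conn_imp_reach[OF conn]) (use that(2) len in \<open>auto simp: V_def\<close>)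
        moreover have "LL Ks ! 0 = K1" unfolding LL_def by simp
        ultimately show ?thesis unfolding V_def len by simp
      qed
    qed
    also have "real (card (cfgs n q K1 I B V)) \<le> ?C ^ card I * real (card K1)
           * (real (card K1) + real (q * card I + (\<Sum>v\<in>V-I. card (B v)))) ^ (card V - 1)"
    proof (rule core)
      show "finite V" unfolding V_def by simp
      show "I \<subseteq> V" by (rule IV)
      have "1 \<in> V" unfolding V_def using kr2 by auto
      then show "V \<noteq> {}" by blast
      show "finite K1" by (rule qsets_finite_el[OF K1])
      show "\<forall>v\<in>V - I. finite (B v)"
      proof
        fix v assume "v \<in> V - I"
        then have "v - k < length Bs" using \<open>length Bs = r\<close> unfolding VI by auto
        then have "B v \<in> set Bs" unfolding B_def by simp
        then show "finite (B v)" using Bs finite_subset by blast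
      qed
    qed
    finally have c0: "real (card ?A) \<le> ?C ^ card I * real (card K1)
           * (real (card K1) + real (q * card I + (\<Sum>v\<in>V-I. card (B v)))) ^ (card V - 1)" by simp
    have c: "real (card ?A) \<le> ?C ^ (k - 1) * real q * (real q + real (q * (k - 1) + (\<Sum>v\<in>V-I. card (B v)))) ^ (k + r - 2)"
    proof -
      have "(0::nat) \<in> {..<k + r}" using k1 by simp
      then have cV: "card V = k + r - 1" unfolding V_def using card_Diff_singleton[of 0 "{..<k + r}"] by simp
      have cI: "card I = k - 1" unfolding I_def by simp
      show ?thesis using c0 unfolding cK1 cV cI by (simp add: diff_diff_left numeral_2_eq_2)
    qed
    have "(\<Sum>v\<in>V-I. card (B v)) \<le> card (V - I) * L"
      by (rule sumB_bound[OF _ Bs]) (use \<open>length Bs = r\<close> in \<open>auto simp: VI B_def\<close>)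
    then have "q + (q * (k - 1) + (\<Sum>v\<in>V-I. card (B v))) \<le> ?M"
    proof -
      have "q + q * (k - 1) = k * q" using k1 by (cases k) auto
      then show ?thesis using \<open>(\<Sum>v\<in>V-I. card (B v)) \<le> card (V - I) * L\<close> unfolding VI by simp
    qed
    moreover have "?C \<ge> 0" by simp
    ultimately have fin: "real (card ?A) \<le> real q * ?C ^ (k - 1) * real ?M ^ (k + r - 2)"
      by (rule final_ineq[OF c])
    have e: "int (k + r) - 2 = int (k + r - 2)" using kr2 by (simp add: of_nat_diff)
    have pw: "real ?M powi (int (k + r) - 2) = real ?M ^ (k + r - 2)" unfolding e by (rule power_int_of_nat)
    show ?thesis unfolding pw using fin .
  qed
qed

lemma rooted_count:
  fixes LL :: "nat set list \<Rightarrow> nat set list"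
  assumes Bs: "\<forall>B\<in>set Bs. B \<subseteq> {1..n} \<and> card B \<le> L" and lenBs: "length Bs = r"
    and R: "R \<in> qsets n q"
    and A: "\<And>Ts. Ts \<in> A \<Longrightarrow> length Ts = l \<and> inter_graph_connected (LL Ts)"
    and lenLL: "\<And>Ts. Ts \<in> A \<Longrightarrow> length (LL Ts) = k + r"
    and L0: "\<And>Ts. Ts \<in> A \<Longrightarrow> LL Ts ! 0 = R"
    and d: "1 \<le> d" "d < k + r" and Ld: "\<And>Ts. Ts \<in> A \<Longrightarrow> LL Ts ! d = R"
    and LI: "\<And>Ts i. Ts \<in> A \<Longrightarrow> i \<in> {1..<k} - {d} \<Longrightarrow> LL Ts ! i \<in> qsets n q"
    and LB: "\<And>Ts v. Ts \<in> A \<Longrightarrow> k \<le> v \<Longrightarrow> v < k + r \<Longrightarrow> LL Ts ! v = Bs ! (v - k)"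
    and pos: "\<And>t. t < l \<Longrightarrow> pos t \<in> {1..<k} - {d}"
    and Lpos: "\<And>Ts t. Ts \<in> A \<Longrightarrow> t < l \<Longrightarrow> LL Ts ! pos t = Ts ! t"
    and m3: "k + r \<ge> 3"
  shows "real (card A) \<le> real (n - 1 choose (q - 1)) ^ card ({1..<k} - {d}) * real q
     * (real q + real (q * card ({1..<k} - {d}) + card ({..<k + r} - {0} - {d} - ({1..<k} - {d})) * L)) ^ (k + r - 3)"
proof -
  let ?C = "real (n - 1 choose (q - 1))"
  define I where "I = {1..<k} - {d}"
  define V where "V = {..<k + r} - {0} - {d}"
  define B where "B = (\<lambda>v. Bs ! (v - k))"
  define phi where "phi = (\<lambda>Ts. restrict (\<lambda>i. LL Ts ! i) I)"
  have IV: "I \<subseteq> V" unfolding I_def V_def by auto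
  have VIk: "v \<in> V - I \<Longrightarrow> k \<le> v \<and> v < k + r" for v unfolding V_def I_def by auto
  have cR: "card R = q" using R unfolding qsets_def by blast
  have "card A \<le> card (cfgs n q R I B V)"
  proof (rule card_le_cfgs[where phi = phi and S = "\<lambda>Ts. nth (LL Ts)"])
    show "inj_on phi A" unfolding phi_def
      by (rule inj_restrict_nth[where l = l and pos = pos]) (use A pos Lpos in \<open>auto simp: I_def\<close>)
    show "finite I" unfolding I_def by simp
    show "phi Ts \<in> PiE I (\<lambda>_. qsets n q)" if "Ts \<in> A" for Ts
      using LI[OF that] unfolding phi_def I_def by auto
    show "SS I (phi Ts) B v = LL Ts ! v" if "Ts \<in> A" "v \<in> V" for Ts v
    proof (cases "v \<in> I")
      case True then show ?thesis unfolding SS_def phi_def by simp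
    next
      case False
      then have "k \<le> v \<and> v < k + r" using VIk that(2) by blast
      then show ?thesis using False LB[OF that(1)] unfolding SS_def B_def by simp
    qed
    show "reach R (nth (LL Ts)) V v" if "Ts \<in> A" "v \<in> V" for Ts v
    proof -
      have len: "length (LL Ts) = k + r" using lenLL[OF that(1)] .
      have conn: "inter_graph_connected (LL Ts)" using A[OF that(1)] by blast
      have "reach (LL Ts ! 0) (nth (LL Ts)) ({..<length (LL Ts)} - {0} - {d}) v"
        by (rule conn_imp_reach[OF conn]) (use that(2) len L0[OF that(1)] Ld[OF that(1)] in \<open>auto simp: V_def\<close>)
      then show ?thesis unfolding V_def len L0[OF that(1)] .
    qed
  qed
  also have "real (card (cfgs n q R I B V)) \<le> ?C ^ card I * real (card R)
         * (real (card R) + real (q * card I + (\<Sum>v\<in>V-I. card (B v)))) ^ (card V - 1)"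
  proof (rule core)
    show "finite V" unfolding V_def by simp
    show "I \<subseteq> V" by (rule IV)
    have "(if d = 1 then 2 else 1) \<in> V" unfolding V_def using m3 d by auto
    then show "V \<noteq> {}" by blast
    show "finite R" by (rule qsets_finite_el[OF R])
    show "\<forall>v\<in>V - I. finite (B v)"
    proof
      fix v assume "v \<in> V - I"
      then have "v - k < length Bs" using lenBs VIk by fastforce
      then have "B v \<in> set Bs" unfolding B_def by simp
      then show "finite (B v)" using Bs finite_subset by blast
    qed
  qed
  finally have c0: "real (card A) \<le> ?C ^ card I * real (card R)
         * (real (card R) + real (q * card I + (\<Sum>v\<in>V-I. card (B v)))) ^ (card V - 1)" by simp
  have cV: "card V = k + r - 2"
  proof -
    have "V = ({..<k + r} - {0}) - {d}" unfolding V_def by simp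
    moreover have "card ({..<k + r} - {0}) = k + r - 1"
    proof -
      have "(0::nat) < k + r" using m3 by linarith
      then show ?thesis using card_Diff_singleton[of 0 "{..<k + r}"] by simp
    qed
    moreover have "d \<in> {..<k + r} - {0}" using d by auto
    ultimately show ?thesis using card_Diff_singleton[of d "{..<k + r} - {0}"] by simp
  qed
  have sb: "(\<Sum>v\<in>V-I. card (B v)) \<le> card (V - I) * L"
  proof (rule sumB_bound[OF _ Bs])
    fix v assume "v \<in> V - I"
    then have "v - k < length Bs" using lenBs VIk by fastforce
    then show "B v \<in> set Bs" unfolding B_def by simp
  qed
  have "(real (card R) + real (q * card I + (\<Sum>v\<in>V-I. card (B v)))) ^ (card V - 1)
      \<le> (real q + real (q * card I + card (V - I) * L)) ^ (k + r - 3)"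
  proof -
    have ex: "card V - 1 = k + r - 3" using cV by simp
    have nb: "q * card I + (\<Sum>v\<in>V-I. card (B v)) \<le> q * card I + card (V - I) * L" using sb by simp
    then have bb: "real q + real (q * card I + (\<Sum>v\<in>V-I. card (B v))) \<le> real q + real (q * card I + card (V - I) * L)"
      by (simp only: add_le_cancel_left of_nat_le_iff)
    have b0: "0 \<le> real q + real (q * card I + (\<Sum>v\<in>V-I. card (B v)))" by (rule add_nonneg_nonneg) (rule of_nat_0_le_iff)+
    show ?thesis unfolding cR ex using power_mono[OF bb b0] .
  qed
  then have "?C ^ card I * real (card R) * (real (card R) + real (q * card I + (\<Sum>v\<in>V-I. card (B v)))) ^ (card V - 1)
      \<le> ?C ^ card I * real q * (real q + real (q * card I + card (V - I) * L)) ^ (k + r - 3)"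
    unfolding cR by (intro mult_left_mono) auto
  then show ?thesis using c0 unfolding I_def V_def by linarith
qed

lemma ins_facts:
  assumes "m \<le> length Ts"
  shows "length (take m Ts @ K # drop m Ts) = length Ts + 1"
    and "(take m Ts @ K # drop m Ts) ! m = K"
    and "t < m \<Longrightarrow> (take m Ts @ K # drop m Ts) ! t = Ts ! t"
    and "m \<le> t \<Longrightarrow> t < length Ts \<Longrightarrow> (take m Ts @ K # drop m Ts) ! Suc t = Ts ! t"
    and "set (take m Ts @ K # drop m Ts) \<subseteq> insert K (set Ts)"
proof -
  show "length (take m Ts @ K # drop m Ts) = length Ts + 1" using assms by simp
  show "(take m Ts @ K # drop m Ts) ! m = K" using assms by (simp add: nth_append)
  show "t < m \<Longrightarrow> (take m Ts @ K # drop m Ts) ! t = Ts ! t" using assms by (simp add: nth_append)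
  show "m \<le> t \<Longrightarrow> t < length Ts \<Longrightarrow> (take m Ts @ K # drop m Ts) ! Suc t = Ts ! t"
  proof -
    assume t: "m \<le> t" "t < length Ts"
    have "(take m Ts @ K # drop m Ts) ! Suc t = (K # drop m Ts) ! (Suc t - m)"
      using assms t by (simp add: nth_append)
    also have "Suc t - m = Suc (t - m)" using t by simp
    also have "(K # drop m Ts) ! Suc (t - m) = drop m Ts ! (t - m)" by simp
    also have "\<dots> = Ts ! t" using assms t by simp
    finally show ?thesis .
  qed
  show "set (take m Ts @ K # drop m Ts) \<subseteq> insert K (set Ts)"
    using set_take_subset[of m Ts] set_drop_subset[of m Ts] by auto
qed

lemma cons_app_nth:
  "((R # X) @ Bs) ! i = (if i = 0 then R else if i \<le> length X then X ! (i - 1) else Bs ! (i - 1 - length X))"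
  by (cases i) (auto simp: nth_append)

lemma part3:
  assumes q1: "1 \<le> q" and lenBs: "length Bs = r" and Bs: "\<forall>B\<in>set Bs. B \<subseteq> {1..n} \<and> card B \<le> L"
    and k2: "k \<ge> 2" and e: "e \<in> {2..k}" and K1: "K1 \<in> qsets n q"
  shows "(let C = card {Ts. length Ts = k - 2 \<and> set Ts \<subseteq> qsets n q \<and>
                    inter_graph_connected
                      ((K1 # (take (e - 2) Ts @ K1 # drop (e - 2) Ts)) @ Bs)}
       in (k + r = 2 \<longrightarrow> C = 1) \<and>
          (k + r \<ge> 3 \<longrightarrow> real C \<le> real q * real (n - 1 choose (q - 1)) ^ (k - 2)
                                * real (k * q + r * L) ^ (k + r - 3)))"
proof -
  define LL where "LL = (\<lambda>Ts. (K1 # (take (e - 2) Ts @ K1 # drop (e - 2) Ts)) @ Bs)"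
  define A where "A = {Ts. length Ts = k - 2 \<and> set Ts \<subseteq> qsets n q \<and> inter_graph_connected (LL Ts)}"
  have K1ne: "K1 \<noteq> {}" using K1 q1 unfolding qsets_def by auto
  have em: "e - 2 \<le> k - 2" using e by auto
  have Ld: "LL Ts ! (e - 1) = K1" if "length Ts = k - 2" for Ts
  proof -
    have "LL Ts ! (e - 1) = (take (e - 2) Ts @ K1 # drop (e - 2) Ts) ! (e - 2)"
      unfolding LL_def cons_app_nth using e that ins_facts(1)[of "e - 2" Ts K1] em
      by (auto simp: numeral_2_eq_2)
    also have "\<dots> = K1" using ins_facts(2)[of "e - 2" Ts K1] em that by simp
    finally show ?thesis .
  qed
  have lenLL: "length (LL Ts) = k + r" if "length Ts = k - 2" for Ts
    unfolding LL_def using that em lenBs k2 by simp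
  have part_a: "k + r = 2 \<longrightarrow> card A = 1"
  proof
    assume "k + r = 2"
    then have kr: "k = 2" "r = 0" using k2 by auto
    have "inter_graph_connected (LL [])"
    proof (rule reach_imp_conn[where rt = 0 and D = "{1}"])
      show "0 < length (LL [])" using lenLL[of "[]"] kr by simp
      show "\<And>d. d \<in> {1} \<Longrightarrow> LL [] ! d = LL [] ! 0" using Ld[of "[]"] e kr unfolding LL_def by simp
      show "{1} \<subseteq> {..<length (LL [])}" using lenLL[of "[]"] kr by simp
      show "{1} \<noteq> {} \<Longrightarrow> LL [] ! 0 \<noteq> {}" using K1ne unfolding LL_def by simp
      show "\<And>u. u \<in> {..<length (LL [])} - {0} - {1} \<Longrightarrow> reach (LL [] ! 0) ((!) (LL [])) ({..<length (LL [])} - {0} - {1}) u"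
        using lenLL[of "[]"] kr by auto
    qed
    then have "A = {[]}" unfolding A_def using kr by auto
    then show "card A = 1" by simp
  qed
  have part_b: "k + r \<ge> 3 \<longrightarrow> real (card A) \<le> real q * real (n - 1 choose (q - 1)) ^ (k - 2)
                                * real (k * q + r * L) ^ (k + r - 3)"
  proof
    assume m3: "k + r \<ge> 3"
    let ?pos = "\<lambda>t. if t < e - 2 then Suc t else Suc (Suc t)"
    have rc: "real (card A) \<le> real (n - 1 choose (q - 1)) ^ card ({1..<k} - {e - 1}) * real q
     * (real q + real (q * card ({1..<k} - {e - 1}) + card ({..<k + r} - {0} - {e - 1} - ({1..<k} - {e - 1})) * L)) ^ (k + r - 3)"
    proof (rule rooted_count[where LL = LL and l = "k - 2" and pos = "?pos"])
      show "\<forall>B\<in>set Bs. B \<subseteq> {1..n} \<and> card B \<le> L" by (rule Bs)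
      show "length Bs = r" by (rule lenBs)
      show "K1 \<in> qsets n q" by (rule K1)
      show "\<And>Ts. Ts \<in> A \<Longrightarrow> length Ts = k - 2 \<and> inter_graph_connected (LL Ts)" unfolding A_def by blast
      show "\<And>Ts. Ts \<in> A \<Longrightarrow> length (LL Ts) = k + r" using lenLL unfolding A_def by blast
      show "\<And>Ts. Ts \<in> A \<Longrightarrow> LL Ts ! 0 = K1" unfolding LL_def by simp
      show "1 \<le> e - 1" "e - 1 < k + r" using e by auto
      show "\<And>Ts. Ts \<in> A \<Longrightarrow> LL Ts ! (e - 1) = K1" using Ld unfolding A_def by blast
      show "LL Ts ! i \<in> qsets n q" if "Ts \<in> A" "i \<in> {1..<k} - {e - 1}" for Ts i
      proof -
        have lT: "length Ts = k - 2" and sT: "set Ts \<subseteq> qsets n q" using that(1) unfolding A_def by auto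
        let ?X = "take (e - 2) Ts @ K1 # drop (e - 2) Ts"
        have lX: "length ?X = k - 1" using ins_facts(1)[of "e - 2" Ts K1] em lT k2 by simp
        have "LL Ts ! i = ?X ! (i - 1)" unfolding LL_def cons_app_nth using that(2) lX by auto
        moreover have "?X ! (i - 1) \<in> set ?X" by (rule nth_mem) (use that(2) lX in auto)
        moreover have "set ?X \<subseteq> qsets n q" using ins_facts(5)[of "e - 2" Ts K1] em lT sT K1 by auto
        ultimately show ?thesis by auto
      qed
      show "LL Ts ! v = Bs ! (v - k)" if "Ts \<in> A" "k \<le> v" "v < k + r" for Ts v
      proof -
        have lT: "length Ts = k - 2" using that(1) unfolding A_def by auto
        have lX: "length (take (e - 2) Ts @ K1 # drop (e - 2) Ts) = k - 1"
          using ins_facts(1)[of "e - 2" Ts K1] em lT k2 by simp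
        show ?thesis unfolding LL_def cons_app_nth lX using that(2) k2 by auto
      qed
      show "?pos t \<in> {1..<k} - {e - 1}" if "t < k - 2" for t using that e by auto
      show "LL Ts ! ?pos t = Ts ! t" if "Ts \<in> A" "t < k - 2" for Ts t
      proof -
        have lT: "length Ts = k - 2" using that(1) unfolding A_def by auto
        let ?X = "take (e - 2) Ts @ K1 # drop (e - 2) Ts"
        have lX: "length ?X = k - 1" using ins_facts(1)[of "e - 2" Ts K1] em lT k2 by simp
        show ?thesis
        proof (cases "t < e - 2")
          case True
          then have "LL Ts ! ?pos t = ?X ! t" unfolding LL_def cons_app_nth using that(2) lX by auto
          also have "\<dots> = Ts ! t" using ins_facts(3)[of "e - 2" Ts t K1] em lT True by simp
          finally show ?thesis .
        next
          case False
          then have "LL Ts ! ?pos t = ?X ! Suc t" unfolding LL_def cons_app_nth using that(2) lX by auto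
          also have "\<dots> = Ts ! t" using ins_facts(4)[of "e - 2" Ts t K1] em lT False that(2) by simp
          finally show ?thesis .
        qed
      qed
      show "3 \<le> k + r" by (rule m3)
    qed
    have c1: "card ({1..<k} - {e - 1}) = k - 2" using e by (subst card_Diff_singleton) auto
    have "{..<k + r} - {0} - {e - 1} - ({1..<k} - {e - 1}) = {k..<k + r}" using e by auto
    then have c2: "card ({..<k + r} - {0} - {e - 1} - ({1..<k} - {e - 1})) = r" by simp
    have rc': "real (card A) \<le> real (n - 1 choose (q - 1)) ^ (k - 2) * real q * (real q + real (q * (k - 2) + r * L)) ^ (k + r - 3)"
      using rc unfolding c1 c2 .
    have "q + (q * (k - 2) + r * L) \<le> k * q + r * L"
    proof -
      have "q + q * (k - 2) \<le> k * q" using k2 by (cases k) (auto simp: algebra_simps)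
      then show ?thesis by simp
    qed
    then show "real (card A) \<le> real q * real (n - 1 choose (q - 1)) ^ (k - 2) * real (k * q + r * L) ^ (k + r - 3)"
      by (rule final_ineq[OF rc']) simp
  qed
  have Aeq: "{Ts. length Ts = k - 2 \<and> set Ts \<subseteq> qsets n q \<and>
                    inter_graph_connected
                      ((K1 # (take (e - 2) Ts @ K1 # drop (e - 2) Ts)) @ Bs)} = A"
    unfolding A_def LL_def by (rule refl)
  show ?thesis unfolding Let_def Aeq using part_a part_b by blast
qed

lemma part4:
  assumes q1: "1 \<le> q" and lenBs: "length Bs = r" and Bs: "\<forall>B\<in>set Bs. B \<subseteq> {1..n} \<and> card B \<le> L"
    and k1: "k \<ge> 1" and r1: "r \<ge> 1" and f: "f \<in> {1..r}" and Bf: "Bs ! (f - 1) \<in> qsets n q"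
  shows "(let C = card {Ks. length Ks = k - 1 \<and> set Ks \<subseteq> qsets n q \<and>
                    inter_graph_connected ((Bs ! (f - 1) # Ks) @ Bs)}
       in (k + r = 2 \<longrightarrow> C = 1) \<and>
          (k + r \<ge> 3 \<longrightarrow> real C \<le> real q * real (n - 1 choose (q - 1)) ^ (k - 1)
                                * real (k * q + r * L) ^ (k + r - 3)))"
proof -
  define R where "R = Bs ! (f - 1)"
  define LL where "LL = (\<lambda>Ks. (R # Ks) @ Bs)"
  define A where "A = {Ks. length Ks = k - 1 \<and> set Ks \<subseteq> qsets n q \<and> inter_graph_connected (LL Ks)}"
  have Rne: "R \<noteq> {}" using Bf q1 unfolding qsets_def R_def by auto
  have lenLL: "length (LL Ks) = k + r" if "length Ks = k - 1" for Ks
    unfolding LL_def using that lenBs k1 by simp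
  have Ld: "LL Ks ! (k + f - 1) = R" if "length Ks = k - 1" for Ks
  proof -
    have "LL Ks ! (k + f - 1) = Bs ! (k + f - 1 - 1 - length Ks)"
      unfolding LL_def cons_app_nth using that f k1 by auto
    also have "k + f - 1 - 1 - length Ks = f - 1" using that f k1 by auto
    finally show ?thesis unfolding R_def .
  qed
  have part_a: "k + r = 2 \<longrightarrow> card A = 1"
  proof
    assume "k + r = 2"
    then have kr: "k = 1" "r = 1" using k1 r1 by auto
    then have f1: "f = 1" using f by auto
    have "inter_graph_connected (LL [])"
    proof (rule reach_imp_conn[where rt = 0 and D = "{1}"])
      show "0 < length (LL [])" using lenLL[of "[]"] kr by simp
      show "\<And>d. d \<in> {1} \<Longrightarrow> LL [] ! d = LL [] ! 0" using Ld[of "[]"] kr f1 unfolding LL_def by simp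
      show "{1} \<subseteq> {..<length (LL [])}" using lenLL[of "[]"] kr by simp
      show "{1} \<noteq> {} \<Longrightarrow> LL [] ! 0 \<noteq> {}" using Rne unfolding LL_def by simp
      show "\<And>u. u \<in> {..<length (LL [])} - {0} - {1} \<Longrightarrow> reach (LL [] ! 0) ((!) (LL [])) ({..<length (LL [])} - {0} - {1}) u"
        using lenLL[of "[]"] kr by auto
    qed
    then have "A = {[]}" unfolding A_def using kr by auto
    then show "card A = 1" by simp
  qed
  have part_b: "k + r \<ge> 3 \<longrightarrow> real (card A) \<le> real q * real (n - 1 choose (q - 1)) ^ (k - 1)
                                * real (k * q + r * L) ^ (k + r - 3)"
  proof
    assume m3: "k + r \<ge> 3"
    have rc: "real (card A) \<le> real (n - 1 choose (q - 1)) ^ card ({1..<k} - {k + f - 1}) * real q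
     * (real q + real (q * card ({1..<k} - {k + f - 1}) + card ({..<k + r} - {0} - {k + f - 1} - ({1..<k} - {k + f - 1})) * L)) ^ (k + r - 3)"
    proof (rule rooted_count[where LL = LL and l = "k - 1" and pos = Suc])
      show "\<forall>B\<in>set Bs. B \<subseteq> {1..n} \<and> card B \<le> L" by (rule Bs)
      show "length Bs = r" by (rule lenBs)
      show "R \<in> qsets n q" unfolding R_def by (rule Bf)
      show "\<And>Ts. Ts \<in> A \<Longrightarrow> length Ts = k - 1 \<and> inter_graph_connected (LL Ts)" unfolding A_def by blast
      show "\<And>Ts. Ts \<in> A \<Longrightarrow> length (LL Ts) = k + r" using lenLL unfolding A_def by blast
      show "\<And>Ts. Ts \<in> A \<Longrightarrow> LL Ts ! 0 = R" unfolding LL_def by simp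
      show "1 \<le> k + f - 1" "k + f - 1 < k + r" using f k1 by auto
      show "\<And>Ts. Ts \<in> A \<Longrightarrow> LL Ts ! (k + f - 1) = R" using Ld unfolding A_def by blast
      show "LL Ts ! i \<in> qsets n q" if "Ts \<in> A" "i \<in> {1..<k} - {k + f - 1}" for Ts i
      proof -
        have lT: "length Ts = k - 1" and sT: "set Ts \<subseteq> qsets n q" using that(1) unfolding A_def by auto
        have "LL Ts ! i = Ts ! (i - 1)" unfolding LL_def cons_app_nth using that(2) lT by auto
        moreover have "Ts ! (i - 1) \<in> set Ts" by (rule nth_mem) (use that(2) lT in auto)
        ultimately show ?thesis using sT by auto
      qed
      show "LL Ts ! v = Bs ! (v - k)" if "Ts \<in> A" "k \<le> v" "v < k + r" for Ts v
      proof -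
        have lT: "length Ts = k - 1" using that(1) unfolding A_def by auto
        show ?thesis unfolding LL_def cons_app_nth lT using that(2) k1 by auto
      qed
      show "Suc t \<in> {1..<k} - {k + f - 1}" if "t < k - 1" for t using that f by auto
      show "LL Ts ! Suc t = Ts ! t" if "Ts \<in> A" "t < k - 1" for Ts t
      proof -
        have lT: "length Ts = k - 1" using that(1) unfolding A_def by auto
        show ?thesis unfolding LL_def cons_app_nth lT using that(2) by auto
      qed
      show "3 \<le> k + r" by (rule m3)
    qed
    have "{1..<k} - {k + f - 1} = {1..<k}" using f by auto
    then have c1: "card ({1..<k} - {k + f - 1}) = k - 1" by simp
    have "{..<k + r} - {0} - {k + f - 1} - ({1..<k} - {k + f - 1}) = {k..<k + r} - {k + f - 1}" using f k1 by auto
    moreover have "card ({k..<k + r} - {k + f - 1}) = r - 1" using f by (subst card_Diff_singleton) auto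
    ultimately have c2: "card ({..<k + r} - {0} - {k + f - 1} - ({1..<k} - {k + f - 1})) = r - 1" by simp
    have rc': "real (card A) \<le> real (n - 1 choose (q - 1)) ^ (k - 1) * real q * (real q + real (q * (k - 1) + (r - 1) * L)) ^ (k + r - 3)"
      using rc unfolding c1 c2 .
    have "q + (q * (k - 1) + (r - 1) * L) \<le> k * q + r * L"
    proof -
      have "q + q * (k - 1) = k * q" using k1 by (cases k) (auto simp: algebra_simps)
      moreover have "(r - 1) * L \<le> r * L" by simp
      ultimately show ?thesis by linarith
    qed
    then show "real (card A) \<le> real q * real (n - 1 choose (q - 1)) ^ (k - 1) * real (k * q + r * L) ^ (k + r - 3)"
      by (rule final_ineq[OF rc']) simp
  qed
  have Aeq: "{Ks. length Ks = k - 1 \<and> set Ks \<subseteq> qsets n q \<and>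
                    inter_graph_connected ((Bs ! (f - 1) # Ks) @ Bs)} = A"
    unfolding A_def LL_def R_def by (rule refl)
  show ?thesis unfolding Let_def Aeq using part_a part_b by blast
qed

lemma part1_K:
  assumes q1: "1 \<le> q" and lenBs: "length Bs = r" and Bs: "\<forall>B\<in>set Bs. B \<subseteq> {1..n} \<and> card B \<le> L"
    and m2: "k + r \<ge> 2" and v: "v < k"
    and A: "\<And>Ks. Ks \<in> Av \<Longrightarrow> length Ks = k \<and> set Ks \<subseteq> qsets n q \<and> x \<in> Ks ! v \<and> inter_graph_connected (Ks @ Bs)"
  shows "real (card Av) \<le> real (n - 1 choose (q - 1)) ^ k * real q * real (k * q + r * L) ^ (k + r - 2)"
proof -
  let ?C = "real (n - 1 choose (q - 1))"
  let ?M = "k * q + r * L"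
  define W where "W = {K\<in>qsets n q. x \<in> K}"
  define AK where "AK = (\<lambda>K. {Ks\<in>Av. Ks ! v = K})"
  define I where "I = {..<k} - {v}"
  define V where "V = {..<k + r} - {v} - ({}::nat set)"
  define B where "B = (\<lambda>w. Bs ! (w - k))"
  have finW: "finite W" unfolding W_def by (rule finite_subset[OF _ finite_qsets]) blast
  have Aeq: "Av = (\<Union>K\<in>W. AK K)"
  proof
    show "Av \<subseteq> (\<Union>K\<in>W. AK K)"
    proof
      fix Ks assume Ks: "Ks \<in> Av"
      have "Ks ! v \<in> set Ks" using A[OF Ks] v by simp
      then have "Ks ! v \<in> W" using A[OF Ks] unfolding W_def by auto
      then show "Ks \<in> (\<Union>K\<in>W. AK K)" using Ks unfolding AK_def by blast
    qed
    show "(\<Union>K\<in>W. AK K) \<subseteq> Av" unfolding AK_def by blast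
  qed
  have VI: "V - I = {k..<k + r}" unfolding V_def I_def using v by auto
  have IV: "I \<subseteq> V" unfolding V_def I_def by auto
  have cV: "card V = k + r - 1" unfolding V_def using v by (simp add: card_Diff_singleton)
  have cI: "card I = k - 1" unfolding I_def using v by (simp add: card_Diff_singleton)
  have SBb: "(\<Sum>w\<in>V-I. card (B w)) \<le> card (V - I) * L"
    by (rule sumB_bound[OF _ Bs]) (use lenBs in \<open>auto simp: VI B_def\<close>)
  have bK: "real (card (AK K)) \<le> ?C ^ (k - 1) * real q * real ?M ^ (k + r - 2)" if K: "K \<in> W" for K
  proof -
    have KQ: "K \<in> qsets n q" using K unfolding W_def by blast
    have n1: "card (AK K) \<le> card (cfgs n q K I B V)"
    proof (rule card_le_cfgs[where phi = "\<lambda>Ks. restrict (\<lambda>i. (Ks @ Bs) ! i) I" and S = "\<lambda>Ks. nth (Ks @ Bs)"])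
      show "inj_on (\<lambda>Ks. restrict (\<lambda>i. (Ks @ Bs) ! i) I) (AK K)"
      proof (rule inj_onI)
        fix Ks Ks' assume K1: "Ks \<in> AK K" and K2: "Ks' \<in> AK K"
          and eq: "restrict (\<lambda>i. (Ks @ Bs) ! i) I = restrict (\<lambda>i. (Ks' @ Bs) ! i) I"
        have l1: "length Ks = k" and l2: "length Ks' = k" using K1 K2 A unfolding AK_def by auto
        show "Ks = Ks'"
        proof (rule nth_equalityI)
          show "length Ks = length Ks'" using l1 l2 by simp
          fix t assume "t < length Ks"
          then have t: "t < k" using l1 by simp
          show "Ks ! t = Ks' ! t"
          proof (cases "t = v")
            case True then show ?thesis using K1 K2 unfolding AK_def by simp
          next
            case False
            then have "t \<in> I" using t unfolding I_def by simp
            then have "(Ks @ Bs) ! t = (Ks' @ Bs) ! t" using fun_cong[OF eq, of t] by simp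
            then show ?thesis using t l1 l2 by (simp add: nth_append)
          qed
        qed
      qed
      show "finite I" unfolding I_def by simp
      show "restrict (\<lambda>i. (Ks @ Bs) ! i) I \<in> PiE I (\<lambda>_. qsets n q)" if "Ks \<in> AK K" for Ks
      proof -
        have l: "length Ks = k" and sK: "set Ks \<subseteq> qsets n q" using that A unfolding AK_def by auto
        have "(Ks @ Bs) ! i \<in> qsets n q" if "i \<in> I" for i
        proof -
          have "i < k" using that unfolding I_def by simp
          then have "(Ks @ Bs) ! i = Ks ! i" "Ks ! i \<in> set Ks" using l by (auto simp: nth_append)
          then show ?thesis using sK by auto
        qed
        then show ?thesis by auto
      qed
      show "SS I (restrict (\<lambda>i. (Ks @ Bs) ! i) I) B w = (Ks @ Bs) ! w" if "Ks \<in> AK K" "w \<in> V" for Ks w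
      proof (cases "w \<in> I")
        case True then show ?thesis unfolding SS_def by simp
      next
        case False
        have l: "length Ks = k" using that A unfolding AK_def by auto
        have "k \<le> w" using False that(2) unfolding I_def V_def by auto
        then show ?thesis using False l unfolding SS_def B_def by (simp add: nth_append)
      qed
      show "reach K (nth (Ks @ Bs)) V w" if "Ks \<in> AK K" "w \<in> V" for Ks w
      proof -
        have AKs: "length Ks = k \<and> set Ks \<subseteq> qsets n q \<and> x \<in> Ks ! v \<and> inter_graph_connected (Ks @ Bs)"
          "Ks ! v = K" using that(1) A unfolding AK_def by auto
        have len: "length (Ks @ Bs) = k + r" using AKs lenBs by simp
        have root: "(Ks @ Bs) ! v = K" using AKs v by (simp add: nth_append)
        have "reach ((Ks @ Bs) ! v) (nth (Ks @ Bs)) ({..<length (Ks @ Bs)} - {v} - {}) w"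
          by (rule conn_imp_reach) (use AKs that(2) len v in \<open>auto simp: V_def\<close>)
        then show ?thesis unfolding root len V_def .
      qed
    qed
    have r1: "real (card (cfgs n q K I B V)) \<le> ?C ^ card I * real (card K)
           * (real (card K) + real (q * card I + (\<Sum>w\<in>V-I. card (B w)))) ^ (card V - 1)"
    proof (rule core)
      show "finite V" unfolding V_def by simp
      show "I \<subseteq> V" by (rule IV)
      have "(if v = 0 then 1 else 0) \<in> V" unfolding V_def using m2 v by auto
      then show "V \<noteq> {}" by blast
      show "finite K" by (rule qsets_finite_el[OF KQ])
      show "\<forall>w\<in>V - I. finite (B w)"
      proof
        fix w assume "w \<in> V - I"
        then have "w - k < length Bs" using lenBs unfolding VI by auto
        then have "B w \<in> set Bs" unfolding B_def by simp
        then show "finite (B w)" using Bs finite_subset by blast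
      qed
    qed
    have h: "real (card (AK K)) \<le> ?C ^ card I * real (card K)
           * (real (card K) + real (q * card I + (\<Sum>w\<in>V-I. card (B w)))) ^ (card V - 1)"
      using n1 r1 by (meson of_nat_le_iff order_trans)
    have cK: "card K = q" using KQ unfolding qsets_def by blast
    have ex: "card V - 1 = k + r - 2" unfolding cV by simp
    have c0: "real (card (AK K)) \<le> ?C ^ (k - 1) * real q
           * (real q + real (q * (k - 1) + (\<Sum>w\<in>V-I. card (B w)))) ^ (k + r - 2)"
      using h unfolding cK cI ex .
    have "q + (q * (k - 1) + (\<Sum>w\<in>V-I. card (B w))) \<le> ?M"
    proof -
      have "q + q * (k - 1) = k * q" using v by (cases k) (auto simp: algebra_simps)
      moreover have "card (V - I) = r" unfolding VI by simp
      ultimately show ?thesis using SBb by simp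
    qed
    moreover have "?C \<ge> 0" by simp
    ultimately show ?thesis by (rule final_ineq[OF c0, THEN order_trans]) (simp add: mult_ac)
  qed
  have "card Av \<le> (\<Sum>K\<in>W. card (AK K))" unfolding Aeq using finW by (rule card_UN_le)
  then have "real (card Av) \<le> (\<Sum>K\<in>W. real (card (AK K)))" unfolding of_nat_sum[symmetric] of_nat_le_iff .
  also have "\<dots> \<le> (\<Sum>K\<in>W. ?C ^ (k - 1) * real q * real ?M ^ (k + r - 2))" by (rule sum_mono) (rule bK)
  also have "\<dots> = real (card W) * (?C ^ (k - 1) * real q * real ?M ^ (k + r - 2))" by simp
  also have "\<dots> \<le> ?C * (?C ^ (k - 1) * real q * real ?M ^ (k + r - 2))"
  proof (rule mult_right_mono)
    have "card W \<le> n - 1 choose (q - 1)" unfolding W_def by (rule card_containing)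
    then show "real (card W) \<le> ?C" by simp
    show "0 \<le> ?C ^ (k - 1) * real q * real ?M ^ (k + r - 2)" by simp
  qed
  also have "\<dots> = ?C ^ k * real q * real ?M ^ (k + r - 2)"
    using v by (cases k) (auto simp: mult_ac)
  finally show ?thesis .
qed

lemma part1_B:
  assumes lenBs: "length Bs = r" and Bs: "\<forall>B\<in>set Bs. B \<subseteq> {1..n} \<and> card B \<le> L"
    and m2: "k + r \<ge> 2" and j: "j < r"
    and A: "\<And>Ks. Ks \<in> Av \<Longrightarrow> length Ks = k \<and> set Ks \<subseteq> qsets n q \<and> inter_graph_connected (Ks @ Bs)"
  shows "real (card Av) \<le> real (n - 1 choose (q - 1)) ^ k * real (card (Bs ! j)) * real (k * q + r * L) ^ (k + r - 2)"
proof -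
  let ?C = "real (n - 1 choose (q - 1))"
  let ?M = "k * q + r * L"
  let ?U = "Bs ! j"
  define I where "I = {..<k}"
  define V where "V = {..<k + r} - {k + j} - ({}::nat set)"
  define B where "B = (\<lambda>w. Bs ! (w - k))"
  have VI: "V - I = {k..<k + r} - {k + j}" unfolding V_def I_def by auto
  have IV: "I \<subseteq> V" unfolding V_def I_def by auto
  have cV: "card V = k + r - 1" unfolding V_def using j by (simp add: card_Diff_singleton)
  have cI: "card I = k" unfolding I_def by simp
  have Uin: "?U \<in> set Bs" using j lenBs by simp
  have n1: "card Av \<le> card (cfgs n q ?U I B V)"
  proof (rule card_le_cfgs[where phi = "\<lambda>Ks. restrict (\<lambda>i. (Ks @ Bs) ! i) I" and S = "\<lambda>Ks. nth (Ks @ Bs)"])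
    show "inj_on (\<lambda>Ks. restrict (\<lambda>i. (Ks @ Bs) ! i) I) Av"
      by (rule inj_restrict_nth[where l = k and pos = id]) (use A in \<open>auto simp: I_def nth_append\<close>)
    show "finite I" unfolding I_def by simp
    show "restrict (\<lambda>i. (Ks @ Bs) ! i) I \<in> PiE I (\<lambda>_. qsets n q)" if "Ks \<in> Av" for Ks
    proof -
      have l: "length Ks = k" and sK: "set Ks \<subseteq> qsets n q" using that A by auto
      have "(Ks @ Bs) ! i \<in> qsets n q" if "i \<in> I" for i
      proof -
        have "i < k" using that unfolding I_def by simp
        then have "(Ks @ Bs) ! i = Ks ! i" "Ks ! i \<in> set Ks" using l by (auto simp: nth_append)
        then show ?thesis using sK by auto
      qed
      then show ?thesis by auto
    qed
    show "SS I (restrict (\<lambda>i. (Ks @ Bs) ! i) I) B w = (Ks @ Bs) ! w" if "Ks \<in> Av" "w \<in> V" for Ks w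
    proof (cases "w \<in> I")
      case True then show ?thesis unfolding SS_def by simp
    next
      case False
      have l: "length Ks = k" using that A by auto
      have "k \<le> w" using False unfolding I_def by auto
      then show ?thesis using False l unfolding SS_def B_def by (simp add: nth_append)
    qed
    show "reach ?U (nth (Ks @ Bs)) V w" if "Ks \<in> Av" "w \<in> V" for Ks w
    proof -
      have AKs: "length Ks = k \<and> set Ks \<subseteq> qsets n q \<and> inter_graph_connected (Ks @ Bs)" using that(1) A by auto
      have len: "length (Ks @ Bs) = k + r" using AKs lenBs by simp
      have root: "(Ks @ Bs) ! (k + j) = ?U" using AKs by (simp add: nth_append)
      have "reach ((Ks @ Bs) ! (k + j)) (nth (Ks @ Bs)) ({..<length (Ks @ Bs)} - {k + j} - {}) w"
        by (rule conn_imp_reach) (use AKs that(2) len j in \<open>auto simp: V_def\<close>)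
      then show ?thesis unfolding root len V_def .
    qed
  qed
  have r1: "real (card (cfgs n q ?U I B V)) \<le> ?C ^ card I * real (card ?U)
         * (real (card ?U) + real (q * card I + (\<Sum>w\<in>V-I. card (B w)))) ^ (card V - 1)"
  proof (rule core)
    show "finite V" unfolding V_def by simp
    show "I \<subseteq> V" by (rule IV)
    have "(if k + j = 0 then 1 else 0) \<in> V" unfolding V_def using m2 j by auto
    then show "V \<noteq> {}" by blast
    show "finite ?U" using Uin Bs finite_subset by blast
    show "\<forall>w\<in>V - I. finite (B w)"
    proof
      fix w assume "w \<in> V - I"
      then have "w - k < length Bs" using lenBs unfolding VI by auto
      then have "B w \<in> set Bs" unfolding B_def by simp
      then show "finite (B w)" using Bs finite_subset by blast
    qed
  qed
  have h: "real (card Av) \<le> ?C ^ k * real (card ?U)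
         * (real (card ?U) + real (q * k + (\<Sum>w\<in>V-I. card (B w)))) ^ (k + r - 2)"
  proof -
    have h0: "real (card Av) \<le> ?C ^ card I * real (card ?U)
         * (real (card ?U) + real (q * card I + (\<Sum>w\<in>V-I. card (B w)))) ^ (card V - 1)"
      using n1 r1 by (meson of_nat_le_iff order_trans)
    have ex: "card V - 1 = k + r - 2" using cV by simp
    show ?thesis using h0 unfolding cI ex .
  qed
  have "card ?U + (\<Sum>w\<in>V-I. card (B w)) = (\<Sum>w\<in>{k..<k + r}. card (B w))"
  proof -
    have "(\<Sum>w\<in>{k..<k + r}. card (B w)) = card (B (k + j)) + (\<Sum>w\<in>{k..<k + r} - {k + j}. card (B w))"
      using j by (intro sum.remove) auto
    then show ?thesis unfolding VI B_def by simp
  qed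
  also have "\<dots> \<le> card {k..<k + r} * L"
    by (rule sumB_bound[OF _ Bs]) (use lenBs in \<open>auto simp: B_def\<close>)
  finally have "card ?U + (q * k + (\<Sum>w\<in>V-I. card (B w))) \<le> ?M" by (simp add: mult.commute)
  then have "real (card ?U) + real (q * k + (\<Sum>w\<in>V-I. card (B w))) \<le> real ?M"
    by (metis of_nat_add of_nat_le_iff)
  moreover have "0 \<le> real (card ?U) + real (q * k + (\<Sum>w\<in>V-I. card (B w)))"
    by (rule add_nonneg_nonneg) (rule of_nat_0_le_iff)+
  ultimately have "(real (card ?U) + real (q * k + (\<Sum>w\<in>V-I. card (B w)))) ^ (k + r - 2) \<le> real ?M ^ (k + r - 2)"
    by (rule power_mono)
  then have "?C ^ k * real (card ?U) * (real (card ?U) + real (q * k + (\<Sum>w\<in>V-I. card (B w)))) ^ (k + r - 2)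
      \<le> ?C ^ k * real (card ?U) * real ?M ^ (k + r - 2)"
    by (intro mult_left_mono) auto
  then show ?thesis using h by linarith
qed

lemma part1:
  assumes q1: "1 \<le> q" and qn: "q \<le> n" and lenBs: "length Bs = r"
    and Bs: "\<forall>B\<in>set Bs. B \<subseteq> {1..n} \<and> card B \<le> L" and x: "x \<in> {1..n}"
  shows "real (card {Ks. length Ks = k \<and> set Ks \<subseteq> qsets n q \<and>
                    x \<in> \<Union>(set Ks) \<union> \<Union>(set Bs) \<and>
                    inter_graph_connected (Ks @ Bs)})
      \<le> real (n - 1 choose (q - 1)) ^ k * real (k * q + r * L) powi (int (k + r) - 1)"
proof -
  let ?C = "real (n - 1 choose (q - 1))"
  let ?M = "k * q + r * L"
  define A where "A = {Ks. length Ks = k \<and> set Ks \<subseteq> qsets n q \<and>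
                    x \<in> \<Union>(set Ks) \<union> \<Union>(set Bs) \<and> inter_graph_connected (Ks @ Bs)}"
  have goal: "real (card A) \<le> ?C ^ k * real ?M powi (int (k + r) - 1)"
  proof (cases "k + r \<le> 1")
    case True
    show ?thesis
    proof (cases "k + r = 0")
      case True
      then have "k = 0" "r = 0" by auto
      then have "A = {}" unfolding A_def using lenBs by auto
      then show ?thesis using \<open>k = 0\<close> \<open>r = 0\<close> by simp
    next
      case False
      then have kr1: "k + r = 1" using True by linarith
      show ?thesis
      proof (cases "k = 1")
        case True
        then have r0: "r = 0" using kr1 by simp
        then have Bs0: "Bs = []" using lenBs by simp
        have "A \<subseteq> (\<lambda>K. [K]) ` {K\<in>qsets n q. x \<in> K}"
        proof
          fix Ks assume "Ks \<in> A"
          then have l: "length Ks = 1" and s: "set Ks \<subseteq> qsets n q" and xs: "x \<in> \<Union>(set Ks)"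
            unfolding A_def using True Bs0 by auto
          then obtain K where K: "Ks = [K]" by (metis One_nat_def length_0_conv length_Suc_conv)
          then show "Ks \<in> (\<lambda>K. [K]) ` {K\<in>qsets n q. x \<in> K}" using s xs by auto
        qed
        then have "card A \<le> card ((\<lambda>K. [K]) ` {K\<in>qsets n q. x \<in> K})"
          by (rule card_mono[rotated]) (rule finite_imageI, rule finite_subset[OF _ finite_qsets], blast)
        also have "\<dots> \<le> card {K\<in>qsets n q. x \<in> K}" by (rule card_image_le) (rule finite_subset[OF _ finite_qsets], blast)
        also have "\<dots> \<le> n - 1 choose (q - 1)" by (rule card_containing)
        finally have "real (card A) \<le> ?C" by simp
        then show ?thesis using True r0 by simp
      next
        case False
        then have k0: "k = 0" "r = 1" using kr1 by auto
        have "A \<subseteq> {[]}" unfolding A_def using k0 by auto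
        then have "card A \<le> card {[]::nat set list}" by (rule card_mono[rotated]) simp
        then have "real (card A) \<le> 1" by simp
        then show ?thesis using k0 by simp
      qed
    qed
  next
    case False
    then have m2: "k + r \<ge> 2" by simp
    define Av where "Av = (\<lambda>v. {Ks\<in>A. x \<in> (Ks @ Bs) ! v})"
    define sv where "sv = (\<lambda>v. if v < k then real q else real (card (Bs ! (v - k))))"
    have Aeq: "A = (\<Union>v\<in>{..<k + r}. Av v)"
    proof
      show "A \<subseteq> (\<Union>v\<in>{..<k + r}. Av v)"
      proof
        fix Ks assume Ks: "Ks \<in> A"
        then have l: "length Ks = k" and xs: "x \<in> \<Union>(set Ks) \<union> \<Union>(set Bs)" unfolding A_def by auto
        then obtain Y where Y: "Y \<in> set (Ks @ Bs)" "x \<in> Y" by auto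
        then obtain v where v: "v < length (Ks @ Bs)" "(Ks @ Bs) ! v = Y" by (metis in_set_conv_nth)
        then have "v < k + r" using l lenBs by simp
        then show "Ks \<in> (\<Union>v\<in>{..<k + r}. Av v)" using Ks v Y unfolding Av_def by blast
      qed
      show "(\<Union>v\<in>{..<k + r}. Av v) \<subseteq> A" unfolding Av_def by blast
    qed
    have bv: "real (card (Av v)) \<le> ?C ^ k * sv v * real ?M ^ (k + r - 2)" if v: "v < k + r" for v
    proof (cases "v < k")
      case True
      have "real (card (Av v)) \<le> ?C ^ k * real q * real ?M ^ (k + r - 2)"
      proof (rule part1_K[OF q1 lenBs Bs m2 True])
        fix Ks assume "Ks \<in> Av v"
        then show "length Ks = k \<and> set Ks \<subseteq> qsets n q \<and> x \<in> Ks ! v \<and> inter_graph_connected (Ks @ Bs)"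
          unfolding Av_def A_def using True by (auto simp: nth_append)
      qed
      then show ?thesis unfolding sv_def using True by simp
    next
      case False
      have j: "v - k < r" using v False by simp
      have "real (card (Av v)) \<le> ?C ^ k * real (card (Bs ! (v - k))) * real ?M ^ (k + r - 2)"
      proof (rule part1_B[OF lenBs Bs m2 j])
        fix Ks assume "Ks \<in> Av v"
        then show "length Ks = k \<and> set Ks \<subseteq> qsets n q \<and> inter_graph_connected (Ks @ Bs)"
          unfolding Av_def A_def by auto
      qed
      then show ?thesis unfolding sv_def using False by simp
    qed
    have "card A \<le> (\<Sum>v\<in>{..<k + r}. card (Av v))" unfolding Aeq by (rule card_UN_le) simp
    then have "real (card A) \<le> (\<Sum>v\<in>{..<k + r}. real (card (Av v)))" unfolding of_nat_sum[symmetric] of_nat_le_iff .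
    also have "\<dots> \<le> (\<Sum>v\<in>{..<k + r}. ?C ^ k * sv v * real ?M ^ (k + r - 2))"
      by (rule sum_mono) (rule bv, simp)
    also have "\<dots> = ?C ^ k * real ?M ^ (k + r - 2) * (\<Sum>v\<in>{..<k + r}. sv v)"
      unfolding sum_distrib_left by (rule sum.cong) (simp_all add: mult_ac)
    finally have cA: "real (card A) \<le> ?C ^ k * real ?M ^ (k + r - 2) * (\<Sum>v\<in>{..<k + r}. sv v)" .
    have sM: "(\<Sum>v\<in>{..<k + r}. sv v) \<le> real ?M"
    proof -
      have e1: "(\<Sum>v\<in>{..<k + r}. sv v) = (\<Sum>v\<in>{0..<k}. sv v) + (\<Sum>v\<in>{k..<k + r}. sv v)"
        by (simp add: lessThan_atLeast0 sum.atLeastLessThan_concat)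
      have e2: "(\<Sum>v\<in>{0..<k}. sv v) = real (k * q)" unfolding sv_def by simp
      have e3: "(\<Sum>v\<in>{k..<k + r}. sv v) = real (\<Sum>v\<in>{k..<k + r}. card (Bs ! (v - k)))"
        unfolding sv_def of_nat_sum by (rule sum.cong) auto
      have n: "(\<Sum>v\<in>{k..<k + r}. card (Bs ! (v - k))) \<le> card {k..<k + r} * L"
        by (rule sumB_bound[OF _ Bs]) (use lenBs in auto)
      then have "k * q + (\<Sum>v\<in>{k..<k + r}. card (Bs ! (v - k))) \<le> ?M" by (simp add: mult.commute)
      then have "real (k * q + (\<Sum>v\<in>{k..<k + r}. card (Bs ! (v - k)))) \<le> real ?M" by (rule of_nat_mono)
      then show ?thesis unfolding e1 e2 e3 of_nat_add .
    qed
    have "?C ^ k * real ?M ^ (k + r - 2) * (\<Sum>v\<in>{..<k + r}. sv v) \<le> ?C ^ k * real ?M ^ (k + r - 2) * real ?M"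
      by (rule mult_left_mono[OF sM]) simp
    with cA have "real (card A) \<le> ?C ^ k * real ?M ^ (k + r - 2) * real ?M" by linarith
    also have "\<dots> = ?C ^ k * real ?M ^ (k + r - 1)"
    proof -
      have e: "k + r - 1 = Suc (k + r - 2)" using m2 by simp
      show ?thesis unfolding e power_Suc by (simp only: mult_ac)
    qed
    also have "real ?M ^ (k + r - 1) = real ?M powi (int (k + r) - 1)"
    proof -
      have e: "int (k + r) - 1 = int (k + r - 1)" using m2 by (simp add: of_nat_diff)
      show ?thesis unfolding e by (rule power_int_of_nat[symmetric])
    qed
    finally show ?thesis .
  qed
  then show ?thesis unfolding A_def .
qed


theorem mainTheorem7:
  fixes n q L r k :: nat and Bs :: "nat set list"
  assumes "1 \<le> q" and "q \<le> n" and "1 \<le> L"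
    and "length Bs = r"
    and "\<forall>B\<in>set Bs. B \<subseteq> {1..n} \<and> card B \<le> L"
  shows
  "(\<forall>x\<in>{1..n}.
      real (card {Ks. length Ks = k \<and> set Ks \<subseteq> qsets n q \<and>
                    x \<in> \<Union>(set Ks) \<union> \<Union>(set Bs) \<and>
                    inter_graph_connected (Ks @ Bs)})
      \<le> real (n - 1 choose (q - 1)) ^ k * real (k * q + r * L) powi (int (k + r) - 1))
   \<and> (k \<ge> 1 \<longrightarrow> (\<forall>K1\<in>qsets n q.
      real (card {Ks. length Ks = k - 1 \<and> set Ks \<subseteq> qsets n q \<and>
                    inter_graph_connected ((K1 # Ks) @ Bs)})
      \<le> real q * real (n - 1 choose (q - 1)) ^ (k - 1)
           * real (k * q + r * L) powi (int (k + r) - 2)))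
   \<and> (k \<ge> 2 \<longrightarrow> (\<forall>e\<in>{2..k}. \<forall>K1\<in>qsets n q.
      (let C = card {Ts. length Ts = k - 2 \<and> set Ts \<subseteq> qsets n q \<and>
                    inter_graph_connected
                      ((K1 # (take (e - 2) Ts @ K1 # drop (e - 2) Ts)) @ Bs)}
       in (k + r = 2 \<longrightarrow> C = 1) \<and>
          (k + r \<ge> 3 \<longrightarrow> real C \<le> real q * real (n - 1 choose (q - 1)) ^ (k - 2)
                                * real (k * q + r * L) ^ (k + r - 3)))))
   \<and> (k \<ge> 1 \<and> r \<ge> 1 \<longrightarrow> (\<forall>f\<in>{1..r}. Bs ! (f - 1) \<in> qsets n q \<longrightarrow>
      (let C = card {Ks. length Ks = k - 1 \<and> set Ks \<subseteq> qsets n q \<and>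
                    inter_graph_connected ((Bs ! (f - 1) # Ks) @ Bs)}
       in (k + r = 2 \<longrightarrow> C = 1) \<and>
          (k + r \<ge> 3 \<longrightarrow> real C \<le> real q * real (n - 1 choose (q - 1)) ^ (k - 1)
                                * real (k * q + r * L) ^ (k + r - 3)))))"
proof (intro conjI)
  show "\<forall>x\<in>{1..n}.
      real (card {Ks. length Ks = k \<and> set Ks \<subseteq> qsets n q \<and>
                    x \<in> \<Union>(set Ks) \<union> \<Union>(set Bs) \<and>
                    inter_graph_connected (Ks @ Bs)})
      \<le> real (n - 1 choose (q - 1)) ^ k * real (k * q + r * L) powi (int (k + r) - 1)"
    using part1[OF assms(1,2,4,5)] by blast
next
  show "k \<ge> 1 \<longrightarrow> (\<forall>K1\<in>qsets n q.
      real (card {Ks. length Ks = k - 1 \<and> set Ks \<subseteq> qsets n q \<and>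
                    inter_graph_connected ((K1 # Ks) @ Bs)})
      \<le> real q * real (n - 1 choose (q - 1)) ^ (k - 1)
           * real (k * q + r * L) powi (int (k + r) - 2))"
    using part2[OF assms(1,4,5)] by blast
next
  show "k \<ge> 2 \<longrightarrow> (\<forall>e\<in>{2..k}. \<forall>K1\<in>qsets n q.
      (let C = card {Ts. length Ts = k - 2 \<and> set Ts \<subseteq> qsets n q \<and>
                    inter_graph_connected
                      ((K1 # (take (e - 2) Ts @ K1 # drop (e - 2) Ts)) @ Bs)}
       in (k + r = 2 \<longrightarrow> C = 1) \<and>
          (k + r \<ge> 3 \<longrightarrow> real C \<le> real q * real (n - 1 choose (q - 1)) ^ (k - 2)
                                * real (k * q + r * L) ^ (k + r - 3))))"
    using part3[OF assms(1,4,5)] by blast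
next
  show "k \<ge> 1 \<and> r \<ge> 1 \<longrightarrow> (\<forall>f\<in>{1..r}. Bs ! (f - 1) \<in> qsets n q \<longrightarrow>
      (let C = card {Ks. length Ks = k - 1 \<and> set Ks \<subseteq> qsets n q \<and>
                    inter_graph_connected ((Bs ! (f - 1) # Ks) @ Bs)}
       in (k + r = 2 \<longrightarrow> C = 1) \<and>
          (k + r \<ge> 3 \<longrightarrow> real C \<le> real q * real (n - 1 choose (q - 1)) ^ (k - 1)
                                * real (k * q + r * L) ^ (k + r - 3))))"
    using part4[OF assms(1,4,5)] by blast
qed

end
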